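(* Assume (A1), (A3) and the additivity condition (Add). Define $\hat f(x,\alpha):=f(x,0)+\sum_{i=1}^m\alpha_i\big(f(x,\mathbf 1_i)-f(x,0)\big)$ and $\hat r(x,\alpha):=r(x,0)+\sum_{i=1}^m\alpha_i\big(r(x,\mathbf 1_i)-r(x,0)\big)$ for $x\in\mathbb R^n$, $\alpha\in\mathbb R^m$, and the reformulated payoff $\hat J(\alpha):=\int_0^T\hat r(y^\alpha(t),\alpha)dt+q(y^\alpha(T))$, where $y^\alpha$ solves $\dot y(t)=\hat f(y(t),\alpha)$, $y(0)=\mathbf x$. If $\hat J$ is concave on $[0,1]^m$, then for every $\bar\alpha\in\{0,1\}^m$, $$D^{NS}J(\bar\alpha)^\top(\alpha-\bar\alpha)\ge J(\alpha)-J(\bar\alpha)\quad\text{for all }\alpha\in\{0,1\}^m.$$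
   Context: Fix $n,m\ge1$, $T>0$, $\mathcal X\subseteq\mathbb R^n$, $\mathbf x\in\mathcal X$, $f:\mathbb R^n\times\mathbb R^m\to\mathbb R^n$, $r:\mathbb R^n\times\mathbb R^m\to\mathbb R$, $q:\mathbb R^n\to\mathbb R$. For $\beta\in\{0,1\}^m$, $x^\beta$ solves $\dot x=f(x,\beta)$, $x(0)=\mathbf x$ on $[0,T]$ (solutions assumed to exist uniquely); $\mathcal J(z,\beta)=\int_0^T r(z(t),\beta)dt+q(z(T))$, $J(\beta)=\mathcal J(x^\beta,\beta)$. $\mathbf 1_i$ is the $i$-th standard basis vector of $\mathbb R^m$. (A1): for each $\alpha\in\{0,1\}^m$, $f(\cdot,\alpha)$ is $C^2$ and globally Lipschitz on $\mathcal X$. (A3): for each $\alpha\in\{0,1\}^m$, $r(\cdot,\alpha)$ and $q$ are continuously differentiable. (Add): for all $x\in\mathcal X$ and $\alpha\in\{0,1\}^m$, $f(x,\alpha)=f(x,0)+\sum_{i=1}^m\big(f(x,\alpha_i\mathbf 1_i)-f(x,0)\big)$ and $r(x,\alpha)=r(x,0)+\sum_{i=1}^m\big(r(x,\alpha_i\mathbf 1_i)-r(x,0)\big)$. Nonstandard derivative: for $\bar\alpha,\alpha\in\{0,1\}^m$, $\epsilon\in[0,1]$, let $x^{\epsilon(\bar\alpha,\alpha)}$ solve $\dot x=(1-\epsilon)f(x,\bar\alpha)+\epsilon f(x,\alpha)$, $x(0)=\mathbf x$, and $\mathcal J^{\epsilon(\bar\alpha,\alpha)}(z)=(1-\epsilon)\mathcal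 J(z,\bar\alpha)+\epsilon\mathcal J(z,\alpha)$. Then $[D^{NS}J(\bar\alpha)]_i=\lim_{\epsilon\to0^+}\frac1\epsilon[\mathcal J^{\epsilon(\bar\alpha,\bar\alpha+\mathbf 1_i)}(x^{\epsilon(\bar\alpha,\bar\alpha+\mathbf 1_i)})-\mathcal J(x^{\bar\alpha},\bar\alpha)]$ if $\bar\alpha_i=0$, and $\lim_{\epsilon\to0^+}\frac1\epsilon[\mathcal J(x^{\bar\alpha},\bar\alpha)-\mathcal J^{\epsilon(\bar\alpha,\bar\alpha-\mathbf 1_i)}(x^{\epsilon(\bar\alpha,\bar\alpha-\mathbf 1_i)})]$ if $\bar\alpha_i=1$. *)

theory Defs
  imports "HOL-Analysis.Analysis"
begin

definition binary :: "(real^'m) set" where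
  "binary = {a. \<forall>i. a $ i = 0 \<or> a $ i = 1}"

definition unit_cube :: "(real^'m) set" where
  "unit_cube = {a. \<forall>i. 0 \<le> a $ i \<and> a $ i \<le> 1}"

definition e :: "'m::finite \<Rightarrow> real^'m" where
  "e i = axis i 1"

definition C1 :: "('a::euclidean_space \<Rightarrow> 'b::euclidean_space) \<Rightarrow> bool" where
  "C1 g \<longleftrightarrow> (\<exists>g'. (\<forall>x. (g has_derivative blinfun_apply (g' x)) (at x)) \<and> continuous_on UNIV g')"

definition C2 :: "('a::euclidean_space \<Rightarrow> 'b::euclidean_space) \<Rightarrow> bool" where
  "C2 g \<longleftrightarrow> (\<exists>g' g''. (\<forall>x. (g has_derivative blinfun_apply (g' x)) (at x)) \<and>
                       (\<forall>x. (g' has_derivative blinfun_apply (g'' x)) (at x)) \<and>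
                       continuous_on UNIV g'')"

definition solves :: "(real^'n) set \<Rightarrow> real \<Rightarrow> real^'n \<Rightarrow> (real^'n \<Rightarrow> real^'n) \<Rightarrow> (real \<Rightarrow> real^'n) \<Rightarrow> bool" where
  "solves X T x0 F z \<longleftrightarrow> z 0 = x0 \<and>
     (\<forall>t\<in>{0..T}. z t \<in> X \<and> (z has_vector_derivative F (z t)) (at t within {0..T}))"

definition unique_sol :: "(real^'n) set \<Rightarrow> real \<Rightarrow> real^'n \<Rightarrow> (real^'n \<Rightarrow> real^'n) \<Rightarrow> bool" where
  "unique_sol X T x0 F \<longleftrightarrow> (\<exists>z. solves X T x0 F z) \<and>
     (\<forall>z1 z2. solves X T x0 F z1 \<and> solves X T x0 F z2 \<longrightarrow> (\<forall>t\<in>{0..T}. z1 t = z2 t))"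

definition traj :: "(real^'n) set \<Rightarrow> real \<Rightarrow> real^'n \<Rightarrow> (real^'n \<Rightarrow> real^'n) \<Rightarrow> real \<Rightarrow> real^'n" where
  "traj X T x0 F = (SOME z. solves X T x0 F z)"

definition Jcal :: "real \<Rightarrow> (real^'n \<Rightarrow> real^'m \<Rightarrow> real) \<Rightarrow> (real^'n \<Rightarrow> real)
                     \<Rightarrow> (real \<Rightarrow> real^'n) \<Rightarrow> real^'m \<Rightarrow> real" where
  "Jcal T r q z b = integral {0..T} (\<lambda>t. r (z t) b) + q (z T)"

definition Jpay :: "(real^'n) set \<Rightarrow> real \<Rightarrow> real^'n \<Rightarrow> (real^'n \<Rightarrow> real^'m \<Rightarrow> real^'n)
                     \<Rightarrow> (real^'n \<Rightarrow> real^'m \<Rightarrow> real) \<Rightarrow> (real^'n \<Rightarrow> real) \<Rightarrow> real^'m \<Rightarrow> real" where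
  "Jpay X T x0 f r q b = Jcal T r q (traj X T x0 (\<lambda>y. f y b)) b"

definition Jeps :: "(real^'n) set \<Rightarrow> real \<Rightarrow> real^'n \<Rightarrow> (real^'n \<Rightarrow> real^'m \<Rightarrow> real^'n)
                     \<Rightarrow> (real^'n \<Rightarrow> real^'m \<Rightarrow> real) \<Rightarrow> (real^'n \<Rightarrow> real)
                     \<Rightarrow> real^'m \<Rightarrow> real^'m \<Rightarrow> real \<Rightarrow> real" where
  "Jeps X T x0 f r q ab a eps =
     (let z = traj X T x0 (\<lambda>y. (1 - eps) *\<^sub>R f y ab + eps *\<^sub>R f y a)
      in (1 - eps) * Jcal T r q z ab + eps * Jcal T r q z a)"

definition DNS :: "(real^'n) set \<Rightarrow> real \<Rightarrow> real^'n \<Rightarrow> (real^'n \<Rightarrow> real^'m \<Rightarrow> real^'n)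
                     \<Rightarrow> (real^'n \<Rightarrow> real^'m \<Rightarrow> real) \<Rightarrow> (real^'n \<Rightarrow> real)
                     \<Rightarrow> real^'m \<Rightarrow> 'm::finite \<Rightarrow> real" where
  "DNS X T x0 f r q ab i =
     (if ab $ i = 0 then
        Lim (at_right 0) (\<lambda>eps. (Jeps X T x0 f r q ab (ab + e i) eps - Jpay X T x0 f r q ab) / eps)
      else
        Lim (at_right 0) (\<lambda>eps. (Jpay X T x0 f r q ab - Jeps X T x0 f r q ab (ab - e i) eps) / eps))"

definition fhat :: "(real^'n \<Rightarrow> real^'m \<Rightarrow> real^'n) \<Rightarrow> real^'n \<Rightarrow> real^'m::finite \<Rightarrow> real^'n" where
  "fhat f x a = f x 0 + (\<Sum>i\<in>UNIV. (a $ i) *\<^sub>R (f x (e i) - f x 0))"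

definition rhat :: "(real^'n \<Rightarrow> real^'m \<Rightarrow> real) \<Rightarrow> real^'n \<Rightarrow> real^'m::finite \<Rightarrow> real" where
  "rhat r x a = r x 0 + (\<Sum>i\<in>UNIV. (a $ i) * (r x (e i) - r x 0))"

definition Jhat :: "(real^'n) set \<Rightarrow> real \<Rightarrow> real^'n \<Rightarrow> (real^'n \<Rightarrow> real^'m \<Rightarrow> real^'n)
                     \<Rightarrow> (real^'n \<Rightarrow> real^'m \<Rightarrow> real) \<Rightarrow> (real^'n \<Rightarrow> real) \<Rightarrow> real^'m::finite \<Rightarrow> real" where
  "Jhat X T x0 f r q a =
     (let y = traj X T x0 (\<lambda>z. fhat f z a)
      in integral {0..T} (\<lambda>t. rhat r (y t) a) + q (y T))"

end

theory Submission
  imports Defs "HOL-Analysis.Analysis"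
begin


lemma gronwall:
  fixes u :: "real \<Rightarrow> real"
  assumes cont: "continuous_on {0..T} u" and K: "0 \<le> K"
    and le: "\<And>t. t \<in> {0..T} \<Longrightarrow> u t \<le> a + K * integral {0..t} u"
    and t: "t \<in> {0..T}"
  shows "u t \<le> a * exp (K * t)"
proof -
  define w where "w s = a + K * integral {0..s} u" for s
  define h where "h s = w s * exp (- K * s)" for s
  have dI: "((\<lambda>s. integral {0..s} u) has_real_derivative u s) (at s within {0..T})"
    if "s \<in> {0..T}" for s
    using integral_has_vector_derivative[OF cont that]
    by (simp add: has_real_derivative_iff_has_vector_derivative)
  have dh: "(h has_real_derivative (K * u s * exp (- K * s) - K * w s * exp (- K * s))) (at s within {0..T})"
    if "s \<in> {0..T}" for s
    unfolding h_def w_def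
    by (rule derivative_eq_intros dI[OF that] refl | simp add: algebra_simps)+
  have hcont: "continuous_on {0..t} h"
  proof -
    have "continuous_on {0..T} h"
      using dh by (meson DERIV_continuous continuous_on_eq_continuous_within)
    then show ?thesis using t by (auto elim: continuous_on_subset)
  qed
  have "h t \<le> h 0"
  proof (rule DERIV_nonpos_imp_decreasing_open[of 0 t h])
    show "0 \<le> t" using t by auto
    fix x assume x: "0 < x" "x < t"
    have "x \<in> {0<..<T}" using x t by auto
    then have "at x within {0..T} = at x" by (simp add: at_within_Icc_at)
    with dh[of x] x t have "(h has_real_derivative (K * u x * exp (- K * x) - K * w x * exp (- K * x))) (at x)"
      by auto
    moreover have "K * u x * exp (- K * x) - K * w x * exp (- K * x) \<le> 0"
    proof -
      have "u x \<le> w x" using le[of x] x t unfolding w_def by auto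
      then have "K * u x \<le> K * w x" using K by (simp add: mult_left_mono)
      then have "K * u x * exp (- K * x) \<le> K * w x * exp (- K * x)" by (rule mult_right_mono) simp
      then show ?thesis by simp
    qed
    ultimately show "\<exists>y. (h has_real_derivative y) (at x) \<and> y \<le> 0" by blast
  qed (use hcont in auto)
  then have "w t \<le> a * exp (K * t)"
    unfolding h_def w_def by (simp add: exp_minus field_simps)
  then show ?thesis using le[OF t] unfolding w_def by auto
qed


lemma unif_lin:
  fixes P :: "'a::euclidean_space \<Rightarrow> 'b::euclidean_space" and P' :: "'a \<Rightarrow> 'a \<Rightarrow>\<^sub>L 'b"
  assumes dP: "\<And>x. (P has_derivative blinfun_apply (P' x)) (at x)"
    and cP': "continuous_on UNIV P'" and S: "compact S" and e: "\<epsilon> > 0"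
  shows "\<exists>\<eta>>0. \<forall>x\<in>S. \<forall>v::'a. norm v < \<eta> \<longrightarrow> norm (P (x+v) - P x - P' x v) \<le> \<epsilon> * norm v"
proof -
  define S1 where "S1 = {x + v | x v. x \<in> S \<and> v \<in> cball (0::'a) 1}"
  have "compact S1" unfolding S1_def by (rule compact_sums[OF S compact_cball])
  then have "uniformly_continuous_on S1 P'"
    using cP' by (meson compact_uniformly_continuous continuous_on_subset subset_UNIV)
  then obtain d where d: "d > 0" and
    dd: "\<And>x x'. x \<in> S1 \<Longrightarrow> x' \<in> S1 \<Longrightarrow> dist x' x < d \<Longrightarrow> dist (P' x') (P' x) < \<epsilon>"
    using e unfolding uniformly_continuous_on_def by metis
  show ?thesis
  proof (intro exI[of _ "min d 1"] conjI ballI allI impI)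
    show "0 < min d 1" using d by simp
    fix x and v :: 'a assume x: "x \<in> S" and v: "norm v < min d 1"
    let ?G = "closed_segment x (x + v)"
    have seg: "x + t *\<^sub>R (x + v - x) \<in> ?G" if "t \<in> {0..1}" for t
      using that by (auto simp: closed_segment_def algebra_simps intro!: exI[of _ t])
    have GS: "w \<in> S1 \<and> dist w x < d" if "w \<in> ?G" for w
    proof -
      from that obtain t where t: "t \<in> {0..1}" "w = x + t *\<^sub>R v"
        by (auto simp: closed_segment_def algebra_simps)
      have "norm (t *\<^sub>R v) \<le> norm v" using t by (simp add: mult_left_le_one_le)
      then have n: "norm (t *\<^sub>R v) < min d 1" using v by linarith
      then have "t *\<^sub>R v \<in> cball 0 1" by simp
      then have "w \<in> S1" unfolding S1_def using t x by blast
      moreover have "dist w x < d" using n t by (simp add: dist_norm)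
      ultimately show ?thesis by blast
    qed
    have xG: "x \<in> ?G" by simp
    have xS1: "x \<in> S1" using GS[OF xG] by blast
    have "norm (P (x + v) - P x - blinfun_apply (P' x) (x + v - x)) \<le> norm (x + v - x) * \<epsilon>"
    proof (rule differentiable_bound_linearization[where S="?G" and f'="\<lambda>w. blinfun_apply (P' w)"])
      show "\<And>t. t \<in> {0..1} \<Longrightarrow> x + t *\<^sub>R (x + v - x) \<in> ?G" by (rule seg)
      show "\<And>w. w \<in> ?G \<Longrightarrow> (P has_derivative blinfun_apply (P' w)) (at w within ?G)"
        using dP has_derivative_at_withinI by blast
      show "x \<in> ?G" by simp
      fix w assume w: "w \<in> ?G"
      have "onorm (blinfun_apply (P' w) - blinfun_apply (P' x)) = norm (P' w - P' x)"
        by (simp add: norm_blinfun.rep_eq minus_blinfun.rep_eq fun_diff_def)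
      also have "\<dots> < \<epsilon>" using dd[OF xS1, of w] GS[OF w] by (simp add: dist_norm)
      finally show "onorm (blinfun_apply (P' w) - blinfun_apply (P' x)) \<le> \<epsilon>" by simp
    qed
    then show "norm (P (x + v) - P x - blinfun_apply (P' x) v) \<le> \<epsilon> * norm v"
      by (simp add: mult.commute)
  qed
qed

lemma unif_cont:
  fixes G :: "'a::euclidean_space \<Rightarrow> 'b::real_normed_vector"
  assumes cG: "continuous_on UNIV G" and S: "compact S" and e: "\<epsilon> > 0"
  shows "\<exists>\<eta>>0. \<forall>x\<in>S. \<forall>v::'a. norm v < \<eta> \<longrightarrow> norm (G (x+v) - G x) \<le> \<epsilon>"
proof -
  define S1 where "S1 = {x + v | x v. x \<in> S \<and> v \<in> cball (0::'a) 1}"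
  have "compact S1" unfolding S1_def by (rule compact_sums[OF S compact_cball])
  then have "uniformly_continuous_on S1 G"
    using cG by (meson compact_uniformly_continuous continuous_on_subset subset_UNIV)
  then obtain d where d: "d > 0" and
    dd: "\<And>x x'. x \<in> S1 \<Longrightarrow> x' \<in> S1 \<Longrightarrow> dist x' x < d \<Longrightarrow> dist (G x') (G x) < \<epsilon>"
    using e unfolding uniformly_continuous_on_def by metis
  show ?thesis
  proof (intro exI[of _ "min d 1"] conjI ballI allI impI)
    show "0 < min d 1" using d by simp
    fix x and v :: 'a assume x: "x \<in> S" and v: "norm v < min d 1"
    have "(0::'a) \<in> cball 0 1" by simp
    then have "x + 0 \<in> S1" unfolding S1_def using x by blast
    then have "x \<in> S1" by simp
    moreover have "v \<in> cball 0 1" using v by simp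
    then have "x + v \<in> S1" unfolding S1_def using x by blast
    ultimately show "norm (G (x + v) - G x) \<le> \<epsilon>"
      using dd[of x "x+v"] v by (simp add: dist_norm)
  qed
qed


lemma static_exp:
  fixes P :: "'a::euclidean_space \<Rightarrow> 'b::euclidean_space" and P' :: "'a \<Rightarrow> 'a \<Rightarrow>\<^sub>L 'b"
    and gs :: "'m::finite \<Rightarrow> 'a \<Rightarrow> 'b"
  assumes dP: "\<And>x. (P has_derivative blinfun_apply (P' x)) (at x)"
    and cP': "continuous_on UNIV P'" and cG: "\<And>j. continuous_on UNIV (gs j)"
    and S: "compact S" and C: "0 \<le> C" and e: "\<epsilon> > 0"
  shows "\<exists>\<eta>>0. \<forall>x\<in>S. \<forall>v (\<delta>::real^'m). norm v \<le> C * (\<Sum>j\<in>UNIV. \<bar>\<delta>$j\<bar>) \<longrightarrow> (\<Sum>j\<in>UNIV. \<bar>\<delta>$j\<bar>) \<le> \<eta> \<longrightarrow>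
     norm (P (x+v) - P x - P' x v + (\<Sum>j\<in>UNIV. \<delta>$j *\<^sub>R (gs j (x+v) - gs j x))) \<le> \<epsilon> * (\<Sum>j\<in>UNIV. \<bar>\<delta>$j\<bar>)"
proof -
  have e1: "\<epsilon> / (2 * (C + 1)) > 0" using e C by simp
  obtain \<eta>1 where \<eta>1: "\<eta>1 > 0" and
    h1: "\<And>x (v::'a). x \<in> S \<Longrightarrow> norm v < \<eta>1 \<Longrightarrow> norm (P (x+v) - P x - P' x v) \<le> \<epsilon> / (2 * (C + 1)) * norm v"
    using unif_lin[OF dP cP' S e1] by blast
  have "\<forall>j. \<exists>\<eta>>0. \<forall>x\<in>S. \<forall>v::'a. norm v < \<eta> \<longrightarrow> norm (gs j (x+v) - gs j x) \<le> \<epsilon>/2"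
    using unif_cont[OF cG S, of "\<epsilon>/2"] e by simp
  then obtain \<eta>j where \<eta>j: "\<And>j. \<eta>j j > 0" and
    hj: "\<And>j x (v::'a). x \<in> S \<Longrightarrow> norm v < \<eta>j j \<Longrightarrow> norm (gs j (x+v) - gs j x) \<le> \<epsilon>/2"
    by metis
  define \<eta>2 where "\<eta>2 = Min (range \<eta>j)"
  have \<eta>2: "\<eta>2 > 0" unfolding \<eta>2_def using \<eta>j by (simp add: Min_gr_iff)
  have \<eta>2j: "\<eta>2 \<le> \<eta>j j" for j unfolding \<eta>2_def by (simp add: Min_le_iff)
  define \<eta> where "\<eta> = min \<eta>1 \<eta>2 / (C + 1)"
  show ?thesis
  proof (intro exI[of _ \<eta>] conjI ballI allI impI)
    show "\<eta> > 0" unfolding \<eta>_def using \<eta>1 \<eta>2 C by simp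
    fix x and v :: 'a and \<delta> :: "real^'m"
    assume x: "x \<in> S" and v: "norm v \<le> C * (\<Sum>j\<in>UNIV. \<bar>\<delta>$j\<bar>)" and N: "(\<Sum>j\<in>UNIV. \<bar>\<delta>$j\<bar>) \<le> \<eta>"
    define N where "N = (\<Sum>j\<in>UNIV. \<bar>\<delta>$j\<bar>)"
    have N0: "N \<ge> 0" unfolding N_def by (simp add: sum_nonneg)
    have "C * N \<le> C * \<eta>" using N C unfolding N_def by (simp add: mult_left_mono)
    also have "C * \<eta> < min \<eta>1 \<eta>2"
    proof -
      have "C * \<eta> = min \<eta>1 \<eta>2 * (C / (C+1))" unfolding \<eta>_def using C by simp
      also have "\<dots> < min \<eta>1 \<eta>2 * 1" using C \<eta>1 \<eta>2 by (intro mult_strict_left_mono) auto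
      finally show ?thesis by simp
    qed
    finally have vlt: "norm v < min \<eta>1 \<eta>2" using v unfolding N_def by linarith
    have t1: "norm (P (x+v) - P x - P' x v) \<le> \<epsilon> / 2 * N"
    proof -
      have "norm (P (x+v) - P x - P' x v) \<le> \<epsilon> / (2 * (C + 1)) * norm v"
        using h1[OF x] vlt by simp
      also have "\<dots> \<le> \<epsilon> / (2 * (C + 1)) * (C * N)"
        using v e1 unfolding N_def by (intro mult_left_mono) auto
      also have "\<dots> = \<epsilon> / 2 * N * (C / (C + 1))" using C by (simp add: field_simps)
      also have "\<dots> \<le> \<epsilon> / 2 * N * 1"
        using C e N0 by (intro mult_left_mono) auto
      finally show ?thesis by simp
    qed
    have t2: "norm (\<Sum>j\<in>UNIV. \<delta>$j *\<^sub>R (gs j (x+v) - gs j x)) \<le> \<epsilon> / 2 * N"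
    proof -
      have "norm (\<Sum>j\<in>UNIV. \<delta>$j *\<^sub>R (gs j (x+v) - gs j x)) \<le> (\<Sum>j\<in>UNIV. norm (\<delta>$j *\<^sub>R (gs j (x+v) - gs j x)))"
        by (rule norm_sum)
      also have "\<dots> \<le> (\<Sum>j\<in>UNIV. \<bar>\<delta>$j\<bar> * (\<epsilon>/2))"
      proof (rule sum_mono)
        fix j
        have "norm v < \<eta>j j" using vlt \<eta>2j[of j] by linarith
        then have "norm (gs j (x+v) - gs j x) \<le> \<epsilon>/2" using hj[OF x] by blast
        then show "norm (\<delta>$j *\<^sub>R (gs j (x+v) - gs j x)) \<le> \<bar>\<delta>$j\<bar> * (\<epsilon>/2)"
          by (simp add: mult_left_mono del: times_divide_eq_right divide_le_eq)
      qed
      also have "\<dots> = \<epsilon> / 2 * N" unfolding N_def by (simp add: sum_distrib_right sum_distrib_left mult.commute)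
      finally show ?thesis .
    qed
    have "norm (P (x+v) - P x - P' x v + (\<Sum>j\<in>UNIV. \<delta>$j *\<^sub>R (gs j (x+v) - gs j x)))
        \<le> norm (P (x+v) - P x - P' x v) + norm (\<Sum>j\<in>UNIV. \<delta>$j *\<^sub>R (gs j (x+v) - gs j x))"
      by (rule norm_triangle_ineq)
    also have "\<dots> \<le> \<epsilon> * N" using t1 t2 by simp
    finally show "norm (P (x+v) - P x - P' x v + (\<Sum>j\<in>UNIV. \<delta>$j *\<^sub>R (gs j (x+v) - gs j x))) \<le> \<epsilon> * (\<Sum>j\<in>UNIV. \<bar>\<delta>$j\<bar>)"
      unfolding N_def .
  qed
qed


definition nrm1 :: "real^'m::finite \<Rightarrow> real" where
  "nrm1 d = (\<Sum>j\<in>UNIV. \<bar>d$j\<bar>)"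

lemma nrm1_nonneg: "nrm1 d \<ge> 0" unfolding nrm1_def by (simp add: sum_nonneg)

locale sys =
  fixes X :: "(real^'n::finite) set" and T :: real and x0 :: "real^'n"
    and F :: "real^'m::finite \<Rightarrow> real^'n \<Rightarrow> real^'n" and G :: "'m \<Rightarrow> real^'n \<Rightarrow> real^'n"
    and K :: real
  assumes T: "0 < T"
    and F_aff: "\<And>\<alpha> y. F \<alpha> y = F 0 y + (\<Sum>j\<in>UNIV. \<alpha>$j *\<^sub>R G j y)"
    and sol: "\<And>\<alpha>. \<alpha> \<in> unit_cube \<Longrightarrow> unique_sol X T x0 (F \<alpha>)"
    and F0c: "continuous_on UNIV (F 0)" and Gc: "\<And>j. continuous_on UNIV (G j)"
    and K: "0 \<le> K" and Lip: "\<And>\<alpha>. \<alpha> \<in> unit_cube \<Longrightarrow> K-lipschitz_on X (F \<alpha>)"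
begin

definition yy where "yy \<alpha> = traj X T x0 (F \<alpha>)"

lemma F_diff: "F \<alpha> y - F \<beta> y = (\<Sum>j\<in>UNIV. (\<alpha>$j - \<beta>$j) *\<^sub>R G j y)"
  by (subst (1 2) F_aff) (simp add: sum_subtractf scaleR_diff_left)

lemma F_cont: "continuous_on S (F \<alpha>)"
proof -
  have "continuous_on UNIV (\<lambda>y. F 0 y + (\<Sum>j\<in>UNIV. \<alpha>$j *\<^sub>R G j y))"
    by (intro continuous_intros F0c Gc)
  then have "continuous_on UNIV (F \<alpha>)" by (subst F_aff[abs_def]) simp
  then show ?thesis by (rule continuous_on_subset) simp
qed

lemma yy_solves: "\<alpha> \<in> unit_cube \<Longrightarrow> solves X T x0 (F \<alpha>) (yy \<alpha>)"
  unfolding yy_def traj_def using sol unfolding unique_sol_def by (metis someI_ex)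

lemma yy_X: "\<alpha> \<in> unit_cube \<Longrightarrow> t \<in> {0..T} \<Longrightarrow> yy \<alpha> t \<in> X"
  using yy_solves unfolding solves_def by blast

lemma yy_0: "\<alpha> \<in> unit_cube \<Longrightarrow> yy \<alpha> 0 = x0"
  using yy_solves unfolding solves_def by blast

lemma yy_der: "\<alpha> \<in> unit_cube \<Longrightarrow> t \<in> {0..T} \<Longrightarrow>
   (yy \<alpha> has_vector_derivative F \<alpha> (yy \<alpha> t)) (at t within {0..T})"
  using yy_solves unfolding solves_def by blast

lemma yy_cont: "\<alpha> \<in> unit_cube \<Longrightarrow> continuous_on {0..T} (yy \<alpha>)"
  using yy_der has_vector_derivative_continuous continuous_on_eq_continuous_within by blast

lemma Fyy_cont: "\<alpha> \<in> unit_cube \<Longrightarrow> continuous_on {0..T} (\<lambda>s. F \<beta> (yy \<alpha> s))"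
  by (rule continuous_on_compose2[OF F_cont yy_cont]) auto

lemma cont_sub: "continuous_on {0..T} g \<Longrightarrow> t \<in> {0..T} \<Longrightarrow> continuous_on {0..t} g"
  by (rule continuous_on_subset) auto

lemma yy_int: assumes a: "\<alpha> \<in> unit_cube" and t: "t \<in> {0..T}"
  shows "yy \<alpha> t = x0 + integral {0..t} (\<lambda>s. F \<alpha> (yy \<alpha> s))"
proof -
  have "((\<lambda>s. F \<alpha> (yy \<alpha> s)) has_integral (yy \<alpha> t - yy \<alpha> 0)) {0..t}"
  proof (rule fundamental_theorem_of_calculus)
    show "0 \<le> t" using t by simp
    fix s assume "s \<in> {0..t}"
    then show "(yy \<alpha> has_vector_derivative F \<alpha> (yy \<alpha> s)) (at s within {0..t})"
      using yy_der[OF a, of s] t by (auto intro: has_vector_derivative_within_subset)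
  qed
  then show ?thesis using yy_0[OF a] by (simp add: integral_unique)
qed

lemma int_sub: "continuous_on {0..T} g \<Longrightarrow> t \<in> {0..T} \<Longrightarrow> g integrable_on {0..t}"
  for g :: "real \<Rightarrow> 'b::euclidean_space"
  by (rule integrable_continuous_real) (rule cont_sub)

lemma diff_int: assumes a: "\<alpha> \<in> unit_cube" and b: "\<beta> \<in> unit_cube" and t: "t \<in> {0..T}"
  shows "yy \<alpha> t - yy \<beta> t = integral {0..t} (\<lambda>s. F \<alpha> (yy \<alpha> s) - F \<beta> (yy \<beta> s))"
  using yy_int[OF a t] yy_int[OF b t]
  by (simp add: integral_diff int_sub[OF Fyy_cont[OF a] t] int_sub[OF Fyy_cont[OF b] t])

lemma bound_curve:
  fixes g :: "real \<Rightarrow> 'b::real_normed_vector"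
  assumes "continuous_on {0..T} g"
  shows "\<exists>M\<ge>0. \<forall>s\<in>{0..T}. norm (g s) \<le> M"
proof -
  have "compact (g ` {0..T})" by (rule compact_continuous_image[OF assms compact_Icc])
  then obtain M where "\<forall>x\<in>g ` {0..T}. norm x \<le> M" using compact_imp_bounded bounded_iff by metis
  then show ?thesis by (intro exI[of _ "max M 0"]) auto
qed

lemma lip_est: assumes b: "\<beta> \<in> unit_cube"
  shows "\<exists>Cl\<ge>0. \<forall>\<delta>. \<beta> + \<delta> \<in> unit_cube \<longrightarrow> (\<forall>t\<in>{0..T}. norm (yy (\<beta>+\<delta>) t - yy \<beta> t) \<le> Cl * nrm1 \<delta>)"
proof -
  have "continuous_on {0..T} (\<lambda>s. \<Sum>j\<in>UNIV. norm (G j (yy \<beta> s)))"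
    by (intro continuous_intros continuous_on_compose2[OF Gc yy_cont[OF b]]) auto
  then obtain Mg where Mg0: "Mg \<ge> 0" and Mg1: "\<And>s. s \<in> {0..T} \<Longrightarrow> norm (\<Sum>j\<in>UNIV. norm (G j (yy \<beta> s))) \<le> Mg"
    using bound_curve by blast
  have Mg: "norm (G j (yy \<beta> s)) \<le> Mg" if "s \<in> {0..T}" for j s
  proof -
    have "norm (G j (yy \<beta> s)) \<le> (\<Sum>j\<in>UNIV. norm (G j (yy \<beta> s)))"
      by (rule member_le_sum) auto
    also have "\<dots> \<le> Mg" using Mg1[OF that] by simp
    finally show ?thesis .
  qed
  show ?thesis
  proof (intro exI[of _ "Mg * T * exp (K * T)"] conjI allI impI ballI)
    show "0 \<le> Mg * T * exp (K * T)" using Mg0 T by simp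
    fix \<delta> t assume a: "\<beta> + \<delta> \<in> unit_cube" and t: "t \<in> {0..T}"
    define u where "u s = norm (yy (\<beta>+\<delta>) s - yy \<beta> s)" for s
    have uc: "continuous_on {0..T} u" unfolding u_def
      by (intro continuous_intros yy_cont a b)
    have "u t \<le> (nrm1 \<delta> * Mg * T) * exp (K * t)"
    proof (rule gronwall[OF uc K _ t])
      fix t assume t: "t \<in> {0..T}"
      have pw: "norm (F (\<beta>+\<delta>) (yy (\<beta>+\<delta>) s) - F \<beta> (yy \<beta> s)) \<le> K * u s + nrm1 \<delta> * Mg"
        if s: "s \<in> {0..t}" for s
      proof -
        have sT: "s \<in> {0..T}" using s t by auto
        have "norm (F (\<beta>+\<delta>) (yy (\<beta>+\<delta>) s) - F \<beta> (yy \<beta> s)) \<le>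
              norm (F (\<beta>+\<delta>) (yy (\<beta>+\<delta>) s) - F (\<beta>+\<delta>) (yy \<beta> s)) + norm (F (\<beta>+\<delta>) (yy \<beta> s) - F \<beta> (yy \<beta> s))"
          by (rule norm_diff_triangle_le[OF order_refl order_refl])
        also have "norm (F (\<beta>+\<delta>) (yy (\<beta>+\<delta>) s) - F (\<beta>+\<delta>) (yy \<beta> s)) \<le> K * u s"
          using lipschitz_onD[OF Lip[OF a] yy_X[OF a sT] yy_X[OF b sT]] unfolding u_def
          by (simp add: dist_norm)
        also have "norm (F (\<beta>+\<delta>) (yy \<beta> s) - F \<beta> (yy \<beta> s)) \<le> nrm1 \<delta> * Mg"
        proof -
          have "norm (F (\<beta>+\<delta>) (yy \<beta> s) - F \<beta> (yy \<beta> s)) = norm (\<Sum>j\<in>UNIV. \<delta>$j *\<^sub>R G j (yy \<beta> s))"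
            by (simp add: F_diff)
          also have "\<dots> \<le> (\<Sum>j\<in>UNIV. \<bar>\<delta>$j\<bar> * Mg)"
            by (rule order_trans[OF norm_sum sum_mono]) (simp add: Mg[OF sT] mult_left_mono)
          also have "\<dots> = nrm1 \<delta> * Mg" unfolding nrm1_def by (simp add: sum_distrib_right)
          finally show ?thesis .
        qed
        finally show ?thesis by simp
      qed
      have "u t = norm (integral {0..t} (\<lambda>s. F (\<beta>+\<delta>) (yy (\<beta>+\<delta>) s) - F \<beta> (yy \<beta> s)))"
        unfolding u_def using diff_int[OF a b t] by simp
      also have "\<dots> \<le> integral {0..t} (\<lambda>s. K * u s + nrm1 \<delta> * Mg)"
      proof (rule integral_norm_bound_integral)
        show "(\<lambda>s. F (\<beta>+\<delta>) (yy (\<beta>+\<delta>) s) - F \<beta> (yy \<beta> s)) integrable_on {0..t}"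
          by (intro int_sub[OF _ t] continuous_intros Fyy_cont a b)
        show "(\<lambda>s. K * u s + nrm1 \<delta> * Mg) integrable_on {0..t}"
          by (intro int_sub[OF _ t] continuous_intros uc)
      qed (rule pw)
      also have "\<dots> = K * integral {0..t} u + nrm1 \<delta> * Mg * t"
      proof -
        have i1: "(\<lambda>s. K * u s) integrable_on {0..t}"
          by (intro int_sub[OF _ t] continuous_intros uc)
        have "integral {0..t} (\<lambda>s. K * u s + nrm1 \<delta> * Mg) = integral {0..t} (\<lambda>s. K * u s) + integral {0..t} (\<lambda>s. nrm1 \<delta> * Mg)"
          by (rule integral_add[OF i1]) (simp add: integrable_on_const)
        then show ?thesis using t by (simp add: integral_mult_right)
      qed
      also have "\<dots> \<le> K * integral {0..t} u + nrm1 \<delta> * Mg * T"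
        using t Mg0 nrm1_nonneg[of \<delta>] by (intro add_left_mono mult_left_mono) auto
      finally show "u t \<le> nrm1 \<delta> * Mg * T + K * integral {0..t} u" by simp
    qed
    also have "\<dots> \<le> (nrm1 \<delta> * Mg * T) * exp (K * T)"
      using t K Mg0 T nrm1_nonneg[of \<delta>] by (intro mult_left_mono) (auto intro: mult_left_mono)
    finally show "norm (yy (\<beta>+\<delta>) t - yy \<beta> t) \<le> Mg * T * exp (K * T) * nrm1 \<delta>"
      unfolding u_def by (simp add: algebra_simps)
  qed
qed


lemma gen_exp:
  fixes \<Phi> :: "real^'m \<Rightarrow> real^'n \<Rightarrow> 'b::euclidean_space" and \<Gamma> :: "'m \<Rightarrow> real^'n \<Rightarrow> 'b"
    and P :: "real^'n \<Rightarrow> 'b" and P' :: "(real^'n) \<Rightarrow> (real^'n) \<Rightarrow>\<^sub>L 'b"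
  assumes aff: "\<And>\<alpha> y. \<Phi> \<alpha> y - \<Phi> \<beta> y = (\<Sum>j\<in>UNIV. (\<alpha>$j - \<beta>$j) *\<^sub>R \<Gamma> j y)"
    and dP: "\<And>x. (P has_derivative blinfun_apply (P' x)) (at x)"
    and cP': "continuous_on UNIV P'" and PX: "\<And>y. y \<in> X \<Longrightarrow> \<Phi> \<beta> y = P y"
    and \<Gamma>c: "\<And>j. continuous_on UNIV (\<Gamma> j)"
    and b: "\<beta> \<in> unit_cube" and e: "\<epsilon> > 0"
  shows "\<exists>\<eta>>0. \<forall>\<delta>. \<beta> + \<delta> \<in> unit_cube \<longrightarrow> nrm1 \<delta> \<le> \<eta> \<longrightarrow> (\<forall>s\<in>{0..T}.
     norm (\<Phi> (\<beta>+\<delta>) (yy (\<beta>+\<delta>) s) - \<Phi> \<beta> (yy \<beta> s) - P' (yy \<beta> s) (yy (\<beta>+\<delta>) s - yy \<beta> s)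
        - (\<Sum>j\<in>UNIV. \<delta>$j *\<^sub>R \<Gamma> j (yy \<beta> s))) \<le> \<epsilon> * nrm1 \<delta>)"
proof -
  obtain Cl where Cl: "Cl \<ge> 0" and
    hCl: "\<And>\<delta> t. \<beta> + \<delta> \<in> unit_cube \<Longrightarrow> t \<in> {0..T} \<Longrightarrow> norm (yy (\<beta>+\<delta>) t - yy \<beta> t) \<le> Cl * nrm1 \<delta>"
    using lip_est[OF b] by blast
  have S: "compact (yy \<beta> ` {0..T})" by (rule compact_continuous_image[OF yy_cont[OF b] compact_Icc])
  obtain \<eta> where \<eta>: "\<eta> > 0" and h: "\<forall>x\<in>yy \<beta> ` {0..T}. \<forall>v (\<delta>::real^'m). norm v \<le> Cl * (\<Sum>j\<in>UNIV. \<bar>\<delta>$j\<bar>) \<longrightarrow> (\<Sum>j\<in>UNIV. \<bar>\<delta>$j\<bar>) \<le> \<eta> \<longrightarrow>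
     norm (P (x+v) - P x - P' x v + (\<Sum>j\<in>UNIV. \<delta>$j *\<^sub>R (\<Gamma> j (x+v) - \<Gamma> j x))) \<le> \<epsilon> * (\<Sum>j\<in>UNIV. \<bar>\<delta>$j\<bar>)"
    using static_exp[where gs=\<Gamma>, OF dP cP' \<Gamma>c S Cl e] by blast
  show ?thesis
  proof (intro exI[of _ \<eta>] conjI allI impI ballI)
    show "\<eta> > 0" by (rule \<eta>)
    fix \<delta> s assume a: "\<beta> + \<delta> \<in> unit_cube" and N: "nrm1 \<delta> \<le> \<eta>" and s: "s \<in> {0..T}"
    define x where "x = yy \<beta> s"
    define v where "v = yy (\<beta>+\<delta>) s - yy \<beta> s"
    have xv: "x + v = yy (\<beta>+\<delta>) s" unfolding x_def v_def by simp
    have xX: "x \<in> X" unfolding x_def using yy_X[OF b s] .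
    have xvX: "x + v \<in> X" unfolding xv using yy_X[OF a s] .
    have eq: "\<Phi> (\<beta>+\<delta>) (x+v) - \<Phi> \<beta> x - P' x v - (\<Sum>j\<in>UNIV. \<delta>$j *\<^sub>R \<Gamma> j x)
        = P (x+v) - P x - P' x v + (\<Sum>j\<in>UNIV. \<delta>$j *\<^sub>R (\<Gamma> j (x+v) - \<Gamma> j x))"
    proof -
      have e1: "\<Phi> (\<beta>+\<delta>) (x+v) = P (x+v) + (\<Sum>j\<in>UNIV. \<delta>$j *\<^sub>R \<Gamma> j (x+v))"
        using aff[of "\<beta>+\<delta>" "x+v"] PX[OF xvX] by (simp add: diff_eq_eq add.commute)
      have e2: "(\<Sum>j\<in>UNIV. \<delta>$j *\<^sub>R (\<Gamma> j (x+v) - \<Gamma> j x)) = (\<Sum>j\<in>UNIV. \<delta>$j *\<^sub>R \<Gamma> j (x+v)) - (\<Sum>j\<in>UNIV. \<delta>$j *\<^sub>R \<Gamma> j x)"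
        by (simp add: scaleR_diff_right sum_subtractf)
      have grp: "(a::'b) + e - b - c - f = a - b - c + (e - f)" for a b c e f
        by (simp add: algebra_simps)
      show ?thesis unfolding e1 e2 PX[OF xX] by (rule grp)
    qed
    have vle: "norm v \<le> Cl * nrm1 \<delta>" unfolding v_def using hCl[OF a s] .
    have xS: "x \<in> yy \<beta> ` {0..T}" unfolding x_def using s by blast
    show "norm (\<Phi> (\<beta>+\<delta>) (yy (\<beta>+\<delta>) s) - \<Phi> \<beta> (yy \<beta> s) - P' (yy \<beta> s) (yy (\<beta>+\<delta>) s - yy \<beta> s)
        - (\<Sum>j\<in>UNIV. \<delta>$j *\<^sub>R \<Gamma> j (yy \<beta> s))) \<le> \<epsilon> * nrm1 \<delta>"
      unfolding v_def[symmetric] x_def[symmetric] xv[symmetric] add_diff_cancel_left' eq using bspec[OF h xS, rule_format, of v \<delta>] vle N unfolding nrm1_def by linarith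
  qed
qed

end


lemma lin_alg:
  fixes A :: "'a::real_normed_vector \<Rightarrow>\<^sub>L 'b::real_normed_vector" and \<Gamma> :: "'m::finite \<Rightarrow> 'b"
  assumes "\<delta>0 = (\<Sum>i\<in>UNIV. \<delta>s i)"
  shows "(A y0 + (\<Sum>j\<in>UNIV. \<delta>0$j *\<^sub>R \<Gamma> j)) - (\<Sum>i\<in>(UNIV::'k::finite set). A (ys i) + (\<Sum>j\<in>UNIV. (\<delta>s i)$j *\<^sub>R \<Gamma> j))
     = A (y0 - (\<Sum>i\<in>UNIV. ys i))"
proof -
  have "(\<Sum>j\<in>UNIV. \<delta>0$j *\<^sub>R \<Gamma> j) = (\<Sum>i\<in>UNIV. \<Sum>j\<in>UNIV. (\<delta>s i)$j *\<^sub>R \<Gamma> j)"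
  proof -
    have "(\<Sum>j\<in>UNIV. \<delta>0$j *\<^sub>R \<Gamma> j) = (\<Sum>j\<in>UNIV. \<Sum>i\<in>UNIV. (\<delta>s i)$j *\<^sub>R \<Gamma> j)"
      unfolding assms sum_component scaleR_sum_left ..
    also have "\<dots> = (\<Sum>i\<in>UNIV. \<Sum>j\<in>UNIV. (\<delta>s i)$j *\<^sub>R \<Gamma> j)"
      by (rule sum.swap)
    finally show ?thesis .
  qed
  then show ?thesis
    by (simp add: blinfun.diff_right blinfun.sum_right sum.distrib algebra_simps)
qed


lemma int_lin:
  fixes A :: "real \<Rightarrow> 'a::real_normed_vector \<Rightarrow>\<^sub>L 'b::euclidean_space" and \<Gamma> :: "'m::finite \<Rightarrow> real \<Rightarrow> 'b"
    and ys :: "'k::finite \<Rightarrow> real \<Rightarrow> 'a"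
  assumes i0: "(\<lambda>s. A s (y0 s) + (\<Sum>j\<in>UNIV. \<delta>0$j *\<^sub>R \<Gamma> j s)) integrable_on S"
    and ii: "\<And>i. (\<lambda>s. A s (ys i s) + (\<Sum>j\<in>UNIV. (\<delta>s i)$j *\<^sub>R \<Gamma> j s)) integrable_on S"
    and d: "\<delta>0 = (\<Sum>i\<in>UNIV. \<delta>s i)"
  shows "integral S (\<lambda>s. A s (y0 s) + (\<Sum>j\<in>UNIV. \<delta>0$j *\<^sub>R \<Gamma> j s))
     - (\<Sum>i\<in>UNIV. integral S (\<lambda>s. A s (ys i s) + (\<Sum>j\<in>UNIV. (\<delta>s i)$j *\<^sub>R \<Gamma> j s)))
     = integral S (\<lambda>s. A s (y0 s - (\<Sum>i\<in>UNIV. ys i s)))"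
proof -
  have "(\<Sum>i\<in>UNIV. integral S (\<lambda>s. A s (ys i s) + (\<Sum>j\<in>UNIV. (\<delta>s i)$j *\<^sub>R \<Gamma> j s)))
     = integral S (\<lambda>s. \<Sum>i\<in>UNIV. A s (ys i s) + (\<Sum>j\<in>UNIV. (\<delta>s i)$j *\<^sub>R \<Gamma> j s))"
    by (rule integral_sum[symmetric]) (use ii in auto)
  moreover have "(\<lambda>s. \<Sum>i\<in>UNIV. A s (ys i s) + (\<Sum>j\<in>UNIV. (\<delta>s i)$j *\<^sub>R \<Gamma> j s)) integrable_on S"
    by (rule integrable_sum) (use ii in auto)
  ultimately have "integral S (\<lambda>s. A s (y0 s) + (\<Sum>j\<in>UNIV. \<delta>0$j *\<^sub>R \<Gamma> j s))
     - (\<Sum>i\<in>UNIV. integral S (\<lambda>s. A s (ys i s) + (\<Sum>j\<in>UNIV. (\<delta>s i)$j *\<^sub>R \<Gamma> j s)))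
     = integral S (\<lambda>s. (A s (y0 s) + (\<Sum>j\<in>UNIV. \<delta>0$j *\<^sub>R \<Gamma> j s))
         - (\<Sum>i\<in>UNIV. A s (ys i s) + (\<Sum>j\<in>UNIV. (\<delta>s i)$j *\<^sub>R \<Gamma> j s)))"
    using integral_diff[OF i0] by simp
  also have "\<dots> = integral S (\<lambda>s. A s (y0 s - (\<Sum>i\<in>UNIV. ys i s)))"
    by (rule integral_cong) (rule lin_alg[OF d])
  finally show ?thesis .
qed

lemma sum_bound:
  fixes \<Gamma> :: "'m::finite \<Rightarrow> 'b::real_normed_vector"
  assumes "\<And>j. norm (\<Gamma> j) \<le> M"
  shows "norm (\<Sum>j\<in>UNIV. \<delta>$j *\<^sub>R \<Gamma> j) \<le> nrm1 \<delta> * M"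
proof -
  have "norm (\<Sum>j\<in>UNIV. \<delta>$j *\<^sub>R \<Gamma> j) \<le> (\<Sum>j\<in>UNIV. \<bar>\<delta>$j\<bar> * M)"
    by (rule order_trans[OF norm_sum sum_mono]) (simp add: assms mult_left_mono)
  also have "\<dots> = nrm1 \<delta> * M" unfolding nrm1_def by (simp add: sum_distrib_right)
  finally show ?thesis .
qed

locale cost = sys X T x0 F G K
  for X :: "(real^'n::finite) set" and T x0 and F :: "real^'m::finite \<Rightarrow> real^'n \<Rightarrow> real^'n" and G K +
  fixes R :: "real^'m::finite \<Rightarrow> real^'n::finite \<Rightarrow> real" and H :: "'m \<Rightarrow> real^'n \<Rightarrow> real"
    and q :: "real^'n \<Rightarrow> real"
    and \<beta> :: "real^'m" and Pf Pf' Pr Pr' q'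
  assumes R_aff: "\<And>\<alpha> y. R \<alpha> y = R 0 y + (\<Sum>j\<in>UNIV. \<alpha>$j * H j y)"
    and R0c: "continuous_on UNIV (R 0)" and Hc: "\<And>j. continuous_on UNIV (H j)"
    and b: "\<beta> \<in> unit_cube"
    and dPf: "\<And>x. (Pf has_derivative blinfun_apply (Pf' x)) (at x)"
    and cPf': "continuous_on UNIV Pf'" and PfX: "\<And>y. y \<in> X \<Longrightarrow> F \<beta> y = Pf y"
    and dPr: "\<And>x. (Pr has_derivative blinfun_apply (Pr' x)) (at x)"
    and cPr': "continuous_on UNIV Pr'" and PrX: "\<And>y. y \<in> X \<Longrightarrow> R \<beta> y = Pr y"
    and dq: "\<And>x. (q has_derivative blinfun_apply (q' x)) (at x)"
    and cq': "continuous_on UNIV q'"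
begin

definition Jh where "Jh \<alpha> = integral {0..T} (\<lambda>t. R \<alpha> (yy \<alpha> t)) + q (yy \<alpha> T)"
definition Y where "Y \<delta> t = yy (\<beta>+\<delta>) t - yy \<beta> t"
definition Lf where "Lf \<delta> t = integral {0..t} (\<lambda>s. Pf' (yy \<beta> s) (Y \<delta> s) + (\<Sum>j\<in>UNIV. \<delta>$j *\<^sub>R G j (yy \<beta> s)))"
definition Lc where "Lc \<delta> = integral {0..T} (\<lambda>s. Pr' (yy \<beta> s) (Y \<delta> s) + (\<Sum>j\<in>UNIV. \<delta>$j *\<^sub>R H j (yy \<beta> s)))
   + q' (yy \<beta> T) (Y \<delta> T)"

lemma R_diff: "R \<alpha> y - R \<gamma> y = (\<Sum>j\<in>UNIV. (\<alpha>$j - \<gamma>$j) *\<^sub>R H j y)"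
  by (subst (1 2) R_aff) (simp add: sum_subtractf left_diff_distrib)

lemma R_cont: "continuous_on S (R \<alpha>)"
proof -
  have "continuous_on UNIV (\<lambda>y. R 0 y + (\<Sum>j\<in>UNIV. \<alpha>$j * H j y))"
    by (intro continuous_intros R0c Hc)
  then have "continuous_on UNIV (R \<alpha>)" by (subst R_aff[abs_def]) simp
  then show ?thesis by (rule continuous_on_subset) simp
qed

lemma Y_cont: "\<beta> + \<delta> \<in> unit_cube \<Longrightarrow> continuous_on {0..T} (Y \<delta>)"
  unfolding Y_def[abs_def] by (intro continuous_intros yy_cont b)

lemma lin_cont:
  fixes P' :: "(real^'n) \<Rightarrow> (real^'n) \<Rightarrow>\<^sub>L 'b::real_normed_vector" and \<Gamma> :: "'m \<Rightarrow> real^'n \<Rightarrow> 'b"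
  assumes "continuous_on UNIV P'" "\<And>j. continuous_on UNIV (\<Gamma> j)" "\<beta> + \<delta> \<in> unit_cube"
  shows "continuous_on {0..T} (\<lambda>s. P' (yy \<beta> s) (Y \<delta> s) + (\<Sum>j\<in>UNIV. \<delta>$j *\<^sub>R \<Gamma> j (yy \<beta> s)))"
  by (intro continuous_intros blinfun.continuous_on Y_cont assms
      continuous_on_compose2[OF assms(1) yy_cont[OF b]] continuous_on_compose2[OF assms(2) yy_cont[OF b]]) auto

lemma q_cont: "continuous_on S q"
  using dq by (meson continuous_at_imp_continuous_on has_derivative_continuous)

lemma traj_exp: assumes e: "\<epsilon> > 0"
  shows "\<exists>\<eta>>0. \<forall>\<delta>. \<beta> + \<delta> \<in> unit_cube \<longrightarrow> nrm1 \<delta> \<le> \<eta> \<longrightarrow> (\<forall>t\<in>{0..T}. norm (Y \<delta> t - Lf \<delta> t) \<le> \<epsilon> * nrm1 \<delta> * T)"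
proof -
  obtain \<eta> where \<eta>: "\<eta> > 0" and h: "\<And>\<delta> s. \<beta> + \<delta> \<in> unit_cube \<Longrightarrow> nrm1 \<delta> \<le> \<eta> \<Longrightarrow> s \<in> {0..T} \<Longrightarrow>
     norm (F (\<beta>+\<delta>) (yy (\<beta>+\<delta>) s) - F \<beta> (yy \<beta> s) - Pf' (yy \<beta> s) (yy (\<beta>+\<delta>) s - yy \<beta> s)
        - (\<Sum>j\<in>UNIV. \<delta>$j *\<^sub>R G j (yy \<beta> s))) \<le> \<epsilon> * nrm1 \<delta>"
    using gen_exp[OF F_diff dPf cPf' PfX Gc b e] by blast
  show ?thesis
  proof (intro exI[of _ \<eta>] conjI allI impI ballI)
    show "\<eta> > 0" by (rule \<eta>)
    fix \<delta> t assume a: "\<beta> + \<delta> \<in> unit_cube" and N: "nrm1 \<delta> \<le> \<eta>" and t: "t \<in> {0..T}"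
    have i1: "(\<lambda>s. F (\<beta>+\<delta>) (yy (\<beta>+\<delta>) s) - F \<beta> (yy \<beta> s)) integrable_on {0..t}"
      by (intro int_sub[OF _ t] continuous_intros Fyy_cont a b)
    have i2: "(\<lambda>s. Pf' (yy \<beta> s) (Y \<delta> s) + (\<Sum>j\<in>UNIV. \<delta>$j *\<^sub>R G j (yy \<beta> s))) integrable_on {0..t}"
      by (intro int_sub[OF _ t] lin_cont cPf' Gc a)
    have "Y \<delta> t - Lf \<delta> t = integral {0..t} (\<lambda>s. (F (\<beta>+\<delta>) (yy (\<beta>+\<delta>) s) - F \<beta> (yy \<beta> s))
        - (Pf' (yy \<beta> s) (Y \<delta> s) + (\<Sum>j\<in>UNIV. \<delta>$j *\<^sub>R G j (yy \<beta> s))))"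
    proof -
      have "Y \<delta> t = integral {0..t} (\<lambda>s. F (\<beta>+\<delta>) (yy (\<beta>+\<delta>) s) - F \<beta> (yy \<beta> s))"
        unfolding Y_def using diff_int[OF a b t] .
      then show ?thesis unfolding Lf_def using integral_diff[OF i1 i2] by simp
    qed
    also have "norm \<dots> \<le> integral {0..t} (\<lambda>s. \<epsilon> * nrm1 \<delta>)"
    proof (rule integral_norm_bound_integral)
      show "(\<lambda>s. (F (\<beta>+\<delta>) (yy (\<beta>+\<delta>) s) - F \<beta> (yy \<beta> s))
        - (Pf' (yy \<beta> s) (Y \<delta> s) + (\<Sum>j\<in>UNIV. \<delta>$j *\<^sub>R G j (yy \<beta> s)))) integrable_on {0..t}"
        by (rule integrable_diff[OF i1 i2])
      show "(\<lambda>s. \<epsilon> * nrm1 \<delta>) integrable_on {0..t}" by (simp add: integrable_on_const)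
      fix s assume s: "s \<in> {0..t}"
      then have sT: "s \<in> {0..T}" using t by auto
      show "norm ((F (\<beta>+\<delta>) (yy (\<beta>+\<delta>) s) - F \<beta> (yy \<beta> s))
        - (Pf' (yy \<beta> s) (Y \<delta> s) + (\<Sum>j\<in>UNIV. \<delta>$j *\<^sub>R G j (yy \<beta> s)))) \<le> \<epsilon> * nrm1 \<delta>"
        using h[OF a N sT] unfolding Y_def by (simp add: algebra_simps)
    qed
    also have "\<dots> = \<epsilon> * nrm1 \<delta> * t" using t by simp
    also have "\<dots> \<le> \<epsilon> * nrm1 \<delta> * T" using t e nrm1_nonneg[of \<delta>] by (intro mult_left_mono) auto
    finally show "norm (Y \<delta> t - Lf \<delta> t) \<le> \<epsilon> * nrm1 \<delta> * T" .
  qed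
qed

lemma cost_exp: assumes e: "\<epsilon> > 0"
  shows "\<exists>\<eta>>0. \<forall>\<delta>. \<beta> + \<delta> \<in> unit_cube \<longrightarrow> nrm1 \<delta> \<le> \<eta> \<longrightarrow> \<bar>Jh (\<beta>+\<delta>) - Jh \<beta> - Lc \<delta>\<bar> \<le> \<epsilon> * nrm1 \<delta> * (T + 1)"
proof -
  obtain \<eta>1 where \<eta>1: "\<eta>1 > 0" and h1: "\<And>\<delta> s. \<beta> + \<delta> \<in> unit_cube \<Longrightarrow> nrm1 \<delta> \<le> \<eta>1 \<Longrightarrow> s \<in> {0..T} \<Longrightarrow>
     norm (R (\<beta>+\<delta>) (yy (\<beta>+\<delta>) s) - R \<beta> (yy \<beta> s) - Pr' (yy \<beta> s) (yy (\<beta>+\<delta>) s - yy \<beta> s)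
        - (\<Sum>j\<in>UNIV. \<delta>$j *\<^sub>R H j (yy \<beta> s))) \<le> \<epsilon> * nrm1 \<delta>"
    using gen_exp[OF R_diff dPr cPr' PrX Hc b e] by blast
  have qaff: "(\<lambda>\<alpha>::real^'m. q) \<alpha> y - (\<lambda>\<alpha>. q) \<beta> y = (\<Sum>j\<in>UNIV. (\<alpha>$j - \<beta>$j) *\<^sub>R (\<lambda>j y. 0::real) j y)" for \<alpha> y
    by simp
  obtain \<eta>2 where \<eta>2: "\<eta>2 > 0" and h2: "\<And>\<delta> s. \<beta> + \<delta> \<in> unit_cube \<Longrightarrow> nrm1 \<delta> \<le> \<eta>2 \<Longrightarrow> s \<in> {0..T} \<Longrightarrow>
     norm (q (yy (\<beta>+\<delta>) s) - q (yy \<beta> s) - q' (yy \<beta> s) (yy (\<beta>+\<delta>) s - yy \<beta> s)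
        - (\<Sum>j\<in>UNIV. \<delta>$j *\<^sub>R (0::real))) \<le> \<epsilon> * nrm1 \<delta>"
    using gen_exp[where \<Phi>="\<lambda>\<alpha>. q" and \<Gamma>="\<lambda>j y. 0", OF qaff dq cq' _ _ b e] by auto
  show ?thesis
  proof (intro exI[of _ "min \<eta>1 \<eta>2"] conjI allI impI)
    show "min \<eta>1 \<eta>2 > 0" using \<eta>1 \<eta>2 by simp
    fix \<delta> assume a: "\<beta> + \<delta> \<in> unit_cube" and N: "nrm1 \<delta> \<le> min \<eta>1 \<eta>2"
    have T0: "T \<in> {0..T}" using T by simp
    have i1: "(\<lambda>s. R (\<beta>+\<delta>) (yy (\<beta>+\<delta>) s)) integrable_on {0..T}"
      by (intro integrable_continuous_real continuous_on_compose2[OF R_cont yy_cont[OF a]]) auto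
    have i0: "(\<lambda>s. R \<beta> (yy \<beta> s)) integrable_on {0..T}"
      by (intro integrable_continuous_real continuous_on_compose2[OF R_cont yy_cont[OF b]]) auto
    have i2: "(\<lambda>s. Pr' (yy \<beta> s) (Y \<delta> s) + (\<Sum>j\<in>UNIV. \<delta>$j *\<^sub>R H j (yy \<beta> s))) integrable_on {0..T}"
      by (intro integrable_continuous_real lin_cont cPr' Hc a)
    have i10: "(\<lambda>s. R (\<beta>+\<delta>) (yy (\<beta>+\<delta>) s) - R \<beta> (yy \<beta> s)) integrable_on {0..T}"
      by (rule integrable_diff[OF i1 i0])
    have "Jh (\<beta>+\<delta>) - Jh \<beta> - Lc \<delta> = integral {0..T} (\<lambda>s. (R (\<beta>+\<delta>) (yy (\<beta>+\<delta>) s) - R \<beta> (yy \<beta> s))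
        - (Pr' (yy \<beta> s) (Y \<delta> s) + (\<Sum>j\<in>UNIV. \<delta>$j *\<^sub>R H j (yy \<beta> s))))
        + (q (yy (\<beta>+\<delta>) T) - q (yy \<beta> T) - q' (yy \<beta> T) (yy (\<beta>+\<delta>) T - yy \<beta> T))"
    proof -
      have d1: "integral {0..T} (\<lambda>s. (R (\<beta>+\<delta>) (yy (\<beta>+\<delta>) s) - R \<beta> (yy \<beta> s))
        - (Pr' (yy \<beta> s) (Y \<delta> s) + (\<Sum>j\<in>UNIV. \<delta>$j *\<^sub>R H j (yy \<beta> s))))
        = integral {0..T} (\<lambda>s. R (\<beta>+\<delta>) (yy (\<beta>+\<delta>) s)) - integral {0..T} (\<lambda>s. R \<beta> (yy \<beta> s))
          - integral {0..T} (\<lambda>s. Pr' (yy \<beta> s) (Y \<delta> s) + (\<Sum>j\<in>UNIV. \<delta>$j *\<^sub>R H j (yy \<beta> s)))"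
        using integral_diff[OF i10 i2] integral_diff[OF i1 i0] by simp
      show ?thesis unfolding Jh_def Lc_def d1 by (simp add: Y_def)
    qed
    also have "\<bar>\<dots>\<bar> \<le> \<epsilon> * nrm1 \<delta> * T + \<epsilon> * nrm1 \<delta>"
    proof (rule order_trans[OF abs_triangle_ineq add_mono])
      have "norm (integral {0..T} (\<lambda>s. (R (\<beta>+\<delta>) (yy (\<beta>+\<delta>) s) - R \<beta> (yy \<beta> s))
        - (Pr' (yy \<beta> s) (Y \<delta> s) + (\<Sum>j\<in>UNIV. \<delta>$j *\<^sub>R H j (yy \<beta> s))))) \<le> integral {0..T} (\<lambda>s. \<epsilon> * nrm1 \<delta>)"
      proof (rule integral_norm_bound_integral)
        show "(\<lambda>s. (R (\<beta>+\<delta>) (yy (\<beta>+\<delta>) s) - R \<beta> (yy \<beta> s))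
          - (Pr' (yy \<beta> s) (Y \<delta> s) + (\<Sum>j\<in>UNIV. \<delta>$j *\<^sub>R H j (yy \<beta> s)))) integrable_on {0..T}"
          by (rule integrable_diff[OF i10 i2])
        show "(\<lambda>s. \<epsilon> * nrm1 \<delta>) integrable_on {0..T}" by (simp add: integrable_on_const)
        fix s assume s: "s \<in> {0..T}"
        show "norm ((R (\<beta>+\<delta>) (yy (\<beta>+\<delta>) s) - R \<beta> (yy \<beta> s))
          - (Pr' (yy \<beta> s) (Y \<delta> s) + (\<Sum>j\<in>UNIV. \<delta>$j *\<^sub>R H j (yy \<beta> s)))) \<le> \<epsilon> * nrm1 \<delta>"
          using h1[OF a _ s] N unfolding Y_def by (simp add: algebra_simps)
      qed
      then show "\<bar>integral {0..T} (\<lambda>s. (R (\<beta>+\<delta>) (yy (\<beta>+\<delta>) s) - R \<beta> (yy \<beta> s))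
        - (Pr' (yy \<beta> s) (Y \<delta> s) + (\<Sum>j\<in>UNIV. \<delta>$j *\<^sub>R H j (yy \<beta> s))))\<bar> \<le> \<epsilon> * nrm1 \<delta> * T"
        using T by (simp add: mult.commute mult.left_commute)
      show "\<bar>q (yy (\<beta>+\<delta>) T) - q (yy \<beta> T) - q' (yy \<beta> T) (yy (\<beta>+\<delta>) T - yy \<beta> T)\<bar> \<le> \<epsilon> * nrm1 \<delta>"
        using h2[OF a _ T0] N by simp
    qed
    finally show "\<bar>Jh (\<beta>+\<delta>) - Jh \<beta> - Lc \<delta>\<bar> \<le> \<epsilon> * nrm1 \<delta> * (T + 1)" by (simp add: algebra_simps)
  qed
qed


lemma bound_fam:
  fixes \<Gamma> :: "'m \<Rightarrow> real^'n \<Rightarrow> 'b::real_normed_vector"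
  assumes "\<And>j. continuous_on UNIV (\<Gamma> j)"
  shows "\<exists>M\<ge>0. \<forall>j. \<forall>s\<in>{0..T}. norm (\<Gamma> j (yy \<beta> s)) \<le> M"
proof -
  have "continuous_on {0..T} (\<lambda>s. \<Sum>j\<in>UNIV. norm (\<Gamma> j (yy \<beta> s)))"
    by (intro continuous_intros continuous_on_compose2[OF assms yy_cont[OF b]]) auto
  then obtain M where M0: "M \<ge> 0" and M1: "\<And>s. s \<in> {0..T} \<Longrightarrow> norm (\<Sum>j\<in>UNIV. norm (\<Gamma> j (yy \<beta> s))) \<le> M"
    using bound_curve by blast
  have "norm (\<Gamma> j (yy \<beta> s)) \<le> M" if "s \<in> {0..T}" for j s
  proof -
    have "norm (\<Gamma> j (yy \<beta> s)) \<le> (\<Sum>j\<in>UNIV. norm (\<Gamma> j (yy \<beta> s)))"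
      by (rule member_le_sum) auto
    also have "\<dots> \<le> M" using M1[OF that] by simp
    finally show ?thesis .
  qed
  then show ?thesis using M0 by blast
qed

lemma bound_op:
  fixes P' :: "(real^'n) \<Rightarrow> (real^'n) \<Rightarrow>\<^sub>L 'b::real_normed_vector"
  assumes "continuous_on UNIV P'"
  shows "\<exists>B\<ge>0. \<forall>s\<in>{0..T}. norm (P' (yy \<beta> s)) \<le> B"
  using bound_curve[OF continuous_on_compose2[OF assms yy_cont[OF b]]] by auto

lemma Lc_bnd:
  "\<exists>C\<ge>0. \<forall>\<delta>. \<beta> + \<delta> \<in> unit_cube \<longrightarrow> \<bar>Lc \<delta>\<bar> \<le> C * nrm1 \<delta>"
proof -
  obtain Cl where Cl: "Cl \<ge> 0" and
    hCl: "\<And>\<delta> t. \<beta> + \<delta> \<in> unit_cube \<Longrightarrow> t \<in> {0..T} \<Longrightarrow> norm (Y \<delta> t) \<le> Cl * nrm1 \<delta>"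
    using lip_est[OF b] unfolding Y_def by blast
  obtain Br where Br: "Br \<ge> 0" "\<And>s. s \<in> {0..T} \<Longrightarrow> norm (Pr' (yy \<beta> s)) \<le> Br"
    using bound_op[OF cPr'] by blast
  obtain Mh where Mh: "Mh \<ge> 0" "\<And>j s. s \<in> {0..T} \<Longrightarrow> norm (H j (yy \<beta> s)) \<le> Mh"
    using bound_fam[where \<Gamma>=H, OF Hc] by blast
  define Bq where "Bq = norm (q' (yy \<beta> T))"
  have T0: "T \<in> {0..T}" using T by simp
  show ?thesis
  proof (intro exI[of _ "T * (Br * Cl + Mh) + Bq * Cl"] conjI allI impI)
    show "0 \<le> T * (Br * Cl + Mh) + Bq * Cl" using T Br Cl Mh by (simp add: Bq_def)
    fix \<delta> assume a: "\<beta> + \<delta> \<in> unit_cube"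
    have "norm (integral {0..T} (\<lambda>s. Pr' (yy \<beta> s) (Y \<delta> s) + (\<Sum>j\<in>UNIV. \<delta>$j *\<^sub>R H j (yy \<beta> s))))
        \<le> integral {0..T} (\<lambda>s. (Br * Cl + Mh) * nrm1 \<delta>)"
    proof (rule integral_norm_bound_integral)
      show "(\<lambda>s. Pr' (yy \<beta> s) (Y \<delta> s) + (\<Sum>j\<in>UNIV. \<delta>$j *\<^sub>R H j (yy \<beta> s))) integrable_on {0..T}"
        by (intro integrable_continuous_real lin_cont cPr' Hc a)
      show "(\<lambda>s. (Br * Cl + Mh) * nrm1 \<delta>) integrable_on {0..T}" by (simp add: integrable_on_const)
      fix s assume s: "s \<in> {0..T}"
      have "norm (Pr' (yy \<beta> s) (Y \<delta> s)) \<le> norm (Pr' (yy \<beta> s)) * norm (Y \<delta> s)" by (rule norm_blinfun)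
      also have "\<dots> \<le> Br * (Cl * nrm1 \<delta>)" using Br hCl[OF a s] s by (intro mult_mono) auto
      finally have 1: "norm (Pr' (yy \<beta> s) (Y \<delta> s)) \<le> Br * (Cl * nrm1 \<delta>)" .
      have 2: "norm (\<Sum>j\<in>UNIV. \<delta>$j *\<^sub>R H j (yy \<beta> s)) \<le> nrm1 \<delta> * Mh"
        by (rule sum_bound) (use Mh s in auto)
      show "norm (Pr' (yy \<beta> s) (Y \<delta> s) + (\<Sum>j\<in>UNIV. \<delta>$j *\<^sub>R H j (yy \<beta> s))) \<le> (Br * Cl + Mh) * nrm1 \<delta>"
        using norm_triangle_le[OF add_mono[OF 1 2]] by (simp add: algebra_simps)
    qed
    also have "\<dots> = T * (Br * Cl + Mh) * nrm1 \<delta>" using T by simp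
    finally have i: "norm (integral {0..T} (\<lambda>s. Pr' (yy \<beta> s) (Y \<delta> s) + (\<Sum>j\<in>UNIV. \<delta>$j *\<^sub>R H j (yy \<beta> s))))
        \<le> T * (Br * Cl + Mh) * nrm1 \<delta>" .
    have "norm (q' (yy \<beta> T) (Y \<delta> T)) \<le> Bq * norm (Y \<delta> T)" unfolding Bq_def by (rule norm_blinfun)
    also have "\<dots> \<le> Bq * (Cl * nrm1 \<delta>)" using hCl[OF a T0] by (intro mult_left_mono) (auto simp: Bq_def)
    finally have j: "norm (q' (yy \<beta> T) (Y \<delta> T)) \<le> Bq * (Cl * nrm1 \<delta>)" .
    show "\<bar>Lc \<delta>\<bar> \<le> (T * (Br * Cl + Mh) + Bq * Cl) * nrm1 \<delta>"
      unfolding Lc_def using abs_triangle_ineq[of "integral {0..T} (\<lambda>s. Pr' (yy \<beta> s) (Y \<delta> s) + (\<Sum>j\<in>UNIV. \<delta>$j *\<^sub>R H j (yy \<beta> s)))" "q' (yy \<beta> T) (Y \<delta> T)"] i j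
      by (simp add: algebra_simps)
  qed
qed

lemma Jh_bnd:
  "\<exists>\<eta>>0. \<exists>C. \<forall>\<delta>. \<beta> + \<delta> \<in> unit_cube \<longrightarrow> nrm1 \<delta> \<le> \<eta> \<longrightarrow> \<bar>Jh (\<beta>+\<delta>) - Jh \<beta>\<bar> \<le> C * nrm1 \<delta>"
proof -
  obtain C where C: "\<And>\<delta>. \<beta> + \<delta> \<in> unit_cube \<Longrightarrow> \<bar>Lc \<delta>\<bar> \<le> C * nrm1 \<delta>" using Lc_bnd by blast
  obtain \<eta> where \<eta>: "\<eta> > 0" and h: "\<And>\<delta>. \<beta> + \<delta> \<in> unit_cube \<Longrightarrow> nrm1 \<delta> \<le> \<eta> \<Longrightarrow>
      \<bar>Jh (\<beta>+\<delta>) - Jh \<beta> - Lc \<delta>\<bar> \<le> 1 * nrm1 \<delta> * (T + 1)"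
    using cost_exp[of 1] by auto
  show ?thesis
  proof (rule exI[of _ \<eta>], intro conjI)
    show "\<eta> > 0" by (rule \<eta>)
    show "\<exists>C. \<forall>\<delta>. \<beta> + \<delta> \<in> unit_cube \<longrightarrow> nrm1 \<delta> \<le> \<eta> \<longrightarrow> \<bar>Jh (\<beta>+\<delta>) - Jh \<beta>\<bar> \<le> C * nrm1 \<delta>"
    proof (intro exI[of _ "C + (T + 1)"] allI impI)
    fix \<delta> assume a: "\<beta> + \<delta> \<in> unit_cube" and N: "nrm1 \<delta> \<le> \<eta>"
    show "\<bar>Jh (\<beta>+\<delta>) - Jh \<beta>\<bar> \<le> (C + (T + 1)) * nrm1 \<delta>"
      using h[OF a N] C[OF a] by (simp add: algebra_simps abs_le_iff)
    qed
  qed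
qed


lemma addit:
  assumes e: "\<epsilon> > 0"
  shows "\<exists>\<eta>>0. \<forall>\<delta>0 (\<delta>s::'k::finite \<Rightarrow> real^'m). \<delta>0 = (\<Sum>i\<in>UNIV. \<delta>s i) \<longrightarrow> \<beta> + \<delta>0 \<in> unit_cube \<longrightarrow>
     (\<forall>i. \<beta> + \<delta>s i \<in> unit_cube) \<longrightarrow> nrm1 \<delta>0 \<le> \<eta> \<longrightarrow> (\<forall>i. nrm1 (\<delta>s i) \<le> \<eta>) \<longrightarrow>
     \<bar>(Jh (\<beta>+\<delta>0) - Jh \<beta>) - (\<Sum>i\<in>UNIV. Jh (\<beta> + \<delta>s i) - Jh \<beta>)\<bar> \<le> \<epsilon> * (nrm1 \<delta>0 + (\<Sum>i\<in>UNIV. nrm1 (\<delta>s i)))"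
proof -
  obtain Bf where Bf: "Bf \<ge> 0" "\<And>s. s \<in> {0..T} \<Longrightarrow> norm (Pf' (yy \<beta> s)) \<le> Bf"
    using bound_op[OF cPf'] by blast
  obtain Br where Br: "Br \<ge> 0" "\<And>s. s \<in> {0..T} \<Longrightarrow> norm (Pr' (yy \<beta> s)) \<le> Br"
    using bound_op[OF cPr'] by blast
  define Bq where "Bq = norm (q' (yy \<beta> T))"
  have Bq: "Bq \<ge> 0" unfolding Bq_def by simp
  define c where "c = (T * Br + Bq) * (T * exp (Bf * T)) + (T + 1)"
  have c: "c > 0" unfolding c_def using T Br Bq by (intro add_nonneg_pos mult_nonneg_nonneg) auto
  define \<epsilon>1 where "\<epsilon>1 = \<epsilon> / c"
  have \<epsilon>1: "\<epsilon>1 > 0" unfolding \<epsilon>1_def using e c by simp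
  obtain \<eta>1 where \<eta>1: "\<eta>1 > 0" and h1: "\<And>\<delta> t. \<beta> + \<delta> \<in> unit_cube \<Longrightarrow> nrm1 \<delta> \<le> \<eta>1 \<Longrightarrow> t \<in> {0..T} \<Longrightarrow>
      norm (Y \<delta> t - Lf \<delta> t) \<le> \<epsilon>1 * nrm1 \<delta> * T"
    using traj_exp[OF \<epsilon>1] by blast
  obtain \<eta>2 where \<eta>2: "\<eta>2 > 0" and h2: "\<And>\<delta>. \<beta> + \<delta> \<in> unit_cube \<Longrightarrow> nrm1 \<delta> \<le> \<eta>2 \<Longrightarrow>
      \<bar>Jh (\<beta>+\<delta>) - Jh \<beta> - Lc \<delta>\<bar> \<le> \<epsilon>1 * nrm1 \<delta> * (T + 1)"
    using cost_exp[OF \<epsilon>1] by blast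
  have T0: "T \<in> {0..T}" using T by simp
  show ?thesis
  proof (rule exI[of _ "min \<eta>1 \<eta>2"], intro conjI allI impI)
    show "min \<eta>1 \<eta>2 > 0" using \<eta>1 \<eta>2 by simp
    fix \<delta>0 and \<delta>s :: "'k \<Rightarrow> real^'m"
    assume d: "\<delta>0 = (\<Sum>i\<in>UNIV. \<delta>s i)" and a0: "\<beta> + \<delta>0 \<in> unit_cube" and ai: "\<forall>i. \<beta> + \<delta>s i \<in> unit_cube"
      and N0: "nrm1 \<delta>0 \<le> min \<eta>1 \<eta>2" and Ni: "\<forall>i. nrm1 (\<delta>s i) \<le> min \<eta>1 \<eta>2"
    define M where "M = nrm1 \<delta>0 + (\<Sum>i\<in>UNIV. nrm1 (\<delta>s i))"
    have M0: "M \<ge> 0" unfolding M_def by (simp add: nrm1_nonneg sum_nonneg add_nonneg_nonneg)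
    define Z where "Z s = Y \<delta>0 s - (\<Sum>i\<in>UNIV. Y (\<delta>s i) s)" for s
    have Zc: "continuous_on {0..T} Z" unfolding Z_def[abs_def]
      by (intro continuous_intros Y_cont a0 ai[rule_format])
    have nZc: "continuous_on {0..T} (\<lambda>s. norm (Z s))" by (intro continuous_intros Zc)
    have ZB: "norm (Z t) \<le> \<epsilon>1 * T * M * exp (Bf * T)" if t: "t \<in> {0..T}" for t
    proof -
      have "norm (Z t) \<le> (\<epsilon>1 * T * M) * exp (Bf * t)"
      proof (rule gronwall[where u="\<lambda>s. norm (Z s)", OF nZc Bf(1) _ t])
        fix t assume t: "t \<in> {0..T}"
        have spl: "Z t = (Lf \<delta>0 t - (\<Sum>i\<in>UNIV. Lf (\<delta>s i) t))
            + ((Y \<delta>0 t - Lf \<delta>0 t) - (\<Sum>i\<in>UNIV. Y (\<delta>s i) t - Lf (\<delta>s i) t))"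
          unfolding Z_def by (simp add: sum_subtractf algebra_simps)
        have lin: "Lf \<delta>0 t - (\<Sum>i\<in>UNIV. Lf (\<delta>s i) t) = integral {0..t} (\<lambda>s. Pf' (yy \<beta> s) (Z s))"
          unfolding Lf_def Z_def
          by (rule int_lin[where A="\<lambda>s. Pf' (yy \<beta> s)" and \<Gamma>="\<lambda>j s. G j (yy \<beta> s)", OF _ _ d])
             (intro int_sub[OF _ t] lin_cont cPf' Gc a0 ai[rule_format])+
        have e1: "norm (integral {0..t} (\<lambda>s. Pf' (yy \<beta> s) (Z s))) \<le> integral {0..t} (\<lambda>s. Bf * norm (Z s))"
        proof (rule integral_norm_bound_integral)
          show "(\<lambda>s. Pf' (yy \<beta> s) (Z s)) integrable_on {0..t}"
            by (intro int_sub[OF _ t] blinfun.continuous_on Zc continuous_on_compose2[OF cPf' yy_cont[OF b]]) auto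
          show "(\<lambda>s. Bf * norm (Z s)) integrable_on {0..t}"
            by (intro int_sub[OF _ t] continuous_intros Zc)
          fix s assume s: "s \<in> {0..t}"
          then have sT: "s \<in> {0..T}" using t by auto
          have "norm (Pf' (yy \<beta> s) (Z s)) \<le> norm (Pf' (yy \<beta> s)) * norm (Z s)" by (rule norm_blinfun)
          also have "\<dots> \<le> Bf * norm (Z s)" using Bf(2)[OF sT] by (intro mult_right_mono) auto
          finally show "norm (Pf' (yy \<beta> s) (Z s)) \<le> Bf * norm (Z s)" .
        qed
        have e2: "norm ((Y \<delta>0 t - Lf \<delta>0 t) - (\<Sum>i\<in>UNIV. Y (\<delta>s i) t - Lf (\<delta>s i) t)) \<le> \<epsilon>1 * T * M"
        proof -
          have "norm ((Y \<delta>0 t - Lf \<delta>0 t) - (\<Sum>i\<in>UNIV. Y (\<delta>s i) t - Lf (\<delta>s i) t))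
              \<le> norm (Y \<delta>0 t - Lf \<delta>0 t) + (\<Sum>i\<in>UNIV. norm (Y (\<delta>s i) t - Lf (\<delta>s i) t))"
            by (rule order_trans[OF norm_triangle_ineq4 add_left_mono[OF norm_sum]])
          also have "\<dots> \<le> \<epsilon>1 * nrm1 \<delta>0 * T + (\<Sum>i\<in>UNIV. \<epsilon>1 * nrm1 (\<delta>s i) * T)"
            using h1[OF a0 _ t] N0 h1[OF ai[rule_format] _ t] Ni by (intro add_mono sum_mono) auto
          also have "\<dots> = \<epsilon>1 * T * M" unfolding M_def by (simp add: sum_distrib_left sum_distrib_right algebra_simps)
          finally show ?thesis .
        qed
        have "norm (Z t) \<le> norm (Lf \<delta>0 t - (\<Sum>i\<in>UNIV. Lf (\<delta>s i) t))
            + norm ((Y \<delta>0 t - Lf \<delta>0 t) - (\<Sum>i\<in>UNIV. Y (\<delta>s i) t - Lf (\<delta>s i) t))"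
          unfolding spl by (rule norm_triangle_ineq)
        also have "\<dots> \<le> Bf * integral {0..t} (\<lambda>s. norm (Z s)) + \<epsilon>1 * T * M"
          using e1 e2 unfolding lin by (simp add: integral_mult_right)
        finally show "norm (Z t) \<le> \<epsilon>1 * T * M + Bf * integral {0..t} (\<lambda>s. norm (Z s))" by simp
      qed
      also have "\<dots> \<le> (\<epsilon>1 * T * M) * exp (Bf * T)"
        using t Bf(1) \<epsilon>1 T M0 by (intro mult_left_mono) (auto intro: mult_left_mono)
      finally show ?thesis by simp
    qed
    define ZB where "ZB = \<epsilon>1 * T * M * exp (Bf * T)"
    have spl: "(Jh (\<beta>+\<delta>0) - Jh \<beta>) - (\<Sum>i\<in>UNIV. Jh (\<beta> + \<delta>s i) - Jh \<beta>)
       = (Lc \<delta>0 - (\<Sum>i\<in>UNIV. Lc (\<delta>s i)))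
         + ((Jh (\<beta>+\<delta>0) - Jh \<beta> - Lc \<delta>0) - (\<Sum>i\<in>UNIV. Jh (\<beta> + \<delta>s i) - Jh \<beta> - Lc (\<delta>s i)))"
      by (simp add: sum_subtractf sum.distrib algebra_simps)
    have lc: "Lc \<delta>0 - (\<Sum>i\<in>UNIV. Lc (\<delta>s i)) = integral {0..T} (\<lambda>s. Pr' (yy \<beta> s) (Z s)) + q' (yy \<beta> T) (Z T)"
    proof -
      have I: "integral {0..T} (\<lambda>s. Pr' (yy \<beta> s) (Y \<delta>0 s) + (\<Sum>j\<in>UNIV. \<delta>0$j *\<^sub>R H j (yy \<beta> s)))
         - (\<Sum>i\<in>UNIV. integral {0..T} (\<lambda>s. Pr' (yy \<beta> s) (Y (\<delta>s i) s) + (\<Sum>j\<in>UNIV. (\<delta>s i)$j *\<^sub>R H j (yy \<beta> s))))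
         = integral {0..T} (\<lambda>s. Pr' (yy \<beta> s) (Z s))"
        unfolding Z_def
        by (rule int_lin[where A="\<lambda>s. Pr' (yy \<beta> s)" and \<Gamma>="\<lambda>j s. H j (yy \<beta> s)", OF _ _ d])
           (intro integrable_continuous_real lin_cont cPr' Hc a0 ai[rule_format])+
      have Q: "q' (yy \<beta> T) (Y \<delta>0 T) - (\<Sum>i\<in>UNIV. q' (yy \<beta> T) (Y (\<delta>s i) T)) = q' (yy \<beta> T) (Z T)"
        unfolding Z_def by (simp add: blinfun.diff_right blinfun.sum_right)
      show ?thesis unfolding Lc_def sum.distrib using I Q by (simp add: algebra_simps)
    qed
    have b1: "\<bar>Lc \<delta>0 - (\<Sum>i\<in>UNIV. Lc (\<delta>s i))\<bar> \<le> T * Br * ZB + Bq * ZB"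
    proof -
      have "norm (integral {0..T} (\<lambda>s. Pr' (yy \<beta> s) (Z s))) \<le> integral {0..T} (\<lambda>s. Br * ZB)"
      proof (rule integral_norm_bound_integral)
        show "(\<lambda>s. Pr' (yy \<beta> s) (Z s)) integrable_on {0..T}"
          by (intro integrable_continuous_real blinfun.continuous_on Zc continuous_on_compose2[OF cPr' yy_cont[OF b]]) auto
        show "(\<lambda>s. Br * ZB) integrable_on {0..T}" by (simp add: integrable_on_const)
        fix s assume s: "s \<in> {0..T}"
        have "norm (Pr' (yy \<beta> s) (Z s)) \<le> norm (Pr' (yy \<beta> s)) * norm (Z s)" by (rule norm_blinfun)
        also have "\<dots> \<le> Br * ZB" using Br(2)[OF s] ZB[OF s] Br(1) unfolding ZB_def by (intro mult_mono) auto
        finally show "norm (Pr' (yy \<beta> s) (Z s)) \<le> Br * ZB" .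
      qed
      then have i: "\<bar>integral {0..T} (\<lambda>s. Pr' (yy \<beta> s) (Z s))\<bar> \<le> T * Br * ZB" using T by (simp add: ac_simps)
      have "norm (q' (yy \<beta> T) (Z T)) \<le> Bq * norm (Z T)" unfolding Bq_def by (rule norm_blinfun)
      also have "\<dots> \<le> Bq * ZB" using ZB[OF T0] Bq unfolding ZB_def by (intro mult_left_mono) auto
      finally have j: "\<bar>q' (yy \<beta> T) (Z T)\<bar> \<le> Bq * ZB" by simp
      show ?thesis unfolding lc using abs_triangle_ineq i j by (smt (verit))
    qed
    have b2: "\<bar>(Jh (\<beta>+\<delta>0) - Jh \<beta> - Lc \<delta>0) - (\<Sum>i\<in>UNIV. Jh (\<beta> + \<delta>s i) - Jh \<beta> - Lc (\<delta>s i))\<bar> \<le> \<epsilon>1 * M * (T + 1)"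
    proof -
      have "\<bar>(Jh (\<beta>+\<delta>0) - Jh \<beta> - Lc \<delta>0) - (\<Sum>i\<in>UNIV. Jh (\<beta> + \<delta>s i) - Jh \<beta> - Lc (\<delta>s i))\<bar>
         \<le> \<bar>Jh (\<beta>+\<delta>0) - Jh \<beta> - Lc \<delta>0\<bar> + (\<Sum>i\<in>UNIV. \<bar>Jh (\<beta> + \<delta>s i) - Jh \<beta> - Lc (\<delta>s i)\<bar>)"
        by (rule order_trans[OF abs_triangle_ineq4 add_left_mono[OF sum_abs]])
      also have "\<dots> \<le> \<epsilon>1 * nrm1 \<delta>0 * (T + 1) + (\<Sum>i\<in>UNIV. \<epsilon>1 * nrm1 (\<delta>s i) * (T + 1))"
        using h2[OF a0] N0 h2[OF ai[rule_format]] Ni by (intro add_mono sum_mono) auto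
      also have "\<dots> = \<epsilon>1 * M * (T + 1)" unfolding M_def by (simp add: sum_distrib_left sum_distrib_right algebra_simps)
      finally show ?thesis .
    qed
    have "\<bar>(Jh (\<beta>+\<delta>0) - Jh \<beta>) - (\<Sum>i\<in>UNIV. Jh (\<beta> + \<delta>s i) - Jh \<beta>)\<bar> \<le> (T * Br * ZB + Bq * ZB) + \<epsilon>1 * M * (T + 1)"
      unfolding spl using abs_triangle_ineq b1 b2 by (smt (verit))
    also have "\<dots> = \<epsilon>1 * c * M" unfolding ZB_def c_def by (simp add: algebra_simps)
    also have "\<dots> = \<epsilon> * M" unfolding \<epsilon>1_def using c by simp
    finally show "\<bar>(Jh (\<beta>+\<delta>0) - Jh \<beta>) - (\<Sum>i\<in>UNIV. Jh (\<beta> + \<delta>s i) - Jh \<beta>)\<bar> \<le> \<epsilon> * (nrm1 \<delta>0 + (\<Sum>i\<in>UNIV. nrm1 (\<delta>s i)))"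
      unfolding M_def .
  qed
qed

end


lemma mono_sup_lim:
  fixes \<psi> :: "real \<Rightarrow> real"
  assumes anti: "\<And>s s'. 0 < s \<Longrightarrow> s \<le> s' \<Longrightarrow> s' \<le> 1 \<Longrightarrow> \<psi> s' \<le> \<psi> s"
    and bnd: "\<exists>\<eta>>0. \<exists>C. \<forall>s. 0 < s \<longrightarrow> s \<le> \<eta> \<longrightarrow> \<psi> s \<le> C"
  shows "(\<psi> \<longlongrightarrow> Sup (\<psi> ` {0<..1})) (at_right 0)" and "\<And>s. s \<in> {0<..1} \<Longrightarrow> \<psi> s \<le> Sup (\<psi> ` {0<..1})"
proof -
  obtain \<eta> C where \<eta>: "\<eta> > 0" and C: "\<And>s. 0 < s \<Longrightarrow> s \<le> \<eta> \<Longrightarrow> \<psi> s \<le> C" using bnd by blast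
  define \<eta>' where "\<eta>' = min \<eta> 1"
  have \<eta>': "0 < \<eta>'" "\<eta>' \<le> \<eta>" "\<eta>' \<le> 1" unfolding \<eta>'_def using \<eta> by auto
  have bdd: "bdd_above (\<psi> ` {0<..1})"
  proof (rule bdd_aboveI2)
    fix s :: real assume s: "s \<in> {0<..1}"
    show "\<psi> s \<le> C"
    proof (cases "s \<le> \<eta>'")
      case True then show ?thesis using C s \<eta>' by auto
    next
      case False
      then have "\<psi> s \<le> \<psi> \<eta>'" using anti[of \<eta>' s] s \<eta>' by auto
      also have "\<dots> \<le> C" using C \<eta>' by auto
      finally show ?thesis .
    qed
  qed
  show up: "\<And>s. s \<in> {0<..1} \<Longrightarrow> \<psi> s \<le> Sup (\<psi> ` {0<..1})"
    using bdd by (intro cSUP_upper) auto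
  have ev: "\<forall>\<^sub>F s in at_right (0::real). s \<in> {0<..<1}" by (rule eventually_at_right_real) simp
  show "(\<psi> \<longlongrightarrow> Sup (\<psi> ` {0<..1})) (at_right 0)"
  proof (rule increasing_tendsto)
    show "\<forall>\<^sub>F s in at_right 0. \<psi> s \<le> Sup (\<psi> ` {0<..1})"
      using ev by eventually_elim (auto intro: up)
    fix x assume "x < Sup (\<psi> ` {0<..1})"
    then obtain s0 where s0: "s0 \<in> {0<..1}" "x < \<psi> s0"
      using less_cSUP_iff[OF _ bdd] by auto
    have "\<forall>\<^sub>F s in at_right (0::real). s \<in> {0<..<s0}" by (rule eventually_at_right_real) (use s0 in auto)
    then show "\<forall>\<^sub>F s in at_right 0. x < \<psi> s"
    proof eventually_elim
      case (elim s)
      then have "\<psi> s0 \<le> \<psi> s" using anti[of s s0] s0 by auto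
      then show ?case using s0 by simp
    qed
  qed
qed

lemma conc_quot:
  fixes h :: "real^'m::finite \<Rightarrow> real"
  assumes conc: "concave_on S h" and a0: "a0 \<in> S" and a1: "a0 + v \<in> S"
    and s: "0 < s" "s \<le> s'" "s' \<le> 1"
  shows "(h (a0 + s' *\<^sub>R v) - h a0) / s' \<le> (h (a0 + s *\<^sub>R v) - h a0) / s"
proof -
  have cS: "convex S" using conc by (simp add: concave_on_iff)
  have as': "a0 + s' *\<^sub>R v \<in> S"
  proof -
    have "(1 - s') *\<^sub>R a0 + s' *\<^sub>R (a0 + v) \<in> S"
      using cS a0 a1 s by (intro convexD) auto
    then show ?thesis by (simp add: algebra_simps)
  qed
  define l where "l = s / s'"
  have l: "0 \<le> l" "l \<le> 1" unfolding l_def using s by auto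
  have eq: "(1 - l) *\<^sub>R a0 + l *\<^sub>R (a0 + s' *\<^sub>R v) = a0 + s *\<^sub>R v"
    unfolding l_def using s by (simp add: algebra_simps)
  have "h (a0 + s *\<^sub>R v) \<ge> (1 - l) * h a0 + l * h (a0 + s' *\<^sub>R v)"
    using concave_onD[OF conc l a0 as'] unfolding eq .
  then have "h (a0 + s *\<^sub>R v) - h a0 \<ge> l * (h (a0 + s' *\<^sub>R v) - h a0)"
    by (simp add: algebra_simps)
  then have "(h (a0 + s *\<^sub>R v) - h a0) / s \<ge> l * (h (a0 + s' *\<^sub>R v) - h a0) / s"
    using s by (simp add: divide_right_mono)
  also have "l * (h (a0 + s' *\<^sub>R v) - h a0) / s = (h (a0 + s' *\<^sub>R v) - h a0) / s'"
    unfolding l_def using s by simp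
  finally show ?thesis .
qed


lemma binary_cube: assumes "b \<in> binary" shows "b \<in> unit_cube"
proof -
  have "0 \<le> b$i \<and> b$i \<le> 1" for i
  proof -
    have "b$i = 0 \<or> b$i = 1" using assms unfolding binary_def by auto
    then show ?thesis by auto
  qed
  then show ?thesis unfolding unit_cube_def by auto
qed

lemma zero_binary: "0 \<in> binary" unfolding binary_def by simp

lemma e_nth: "e i $ j = (if j = i then 1 else 0)"
  unfolding e_def axis_def by simp

lemma e_binary: "e i \<in> binary" unfolding binary_def by (simp add: e_nth)

lemma nrm1_e: "nrm1 (c *\<^sub>R e i) = \<bar>c\<bar>"
  unfolding nrm1_def by (simp add: e_nth if_distrib cong: if_cong)

lemma nrm1_scale: "nrm1 (c *\<^sub>R d) = \<bar>c\<bar> * nrm1 d"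
  unfolding nrm1_def by (simp add: abs_mult sum_distrib_left)

lemma expand_e: "(d::real^'m::finite) = (\<Sum>i\<in>UNIV. d$i *\<^sub>R e i)"
  by (simp add: vec_eq_iff sum_component e_nth if_distrib cong: if_cong)

lemma fhat_bin:
  assumes add: "f y b = f y 0 + (\<Sum>i\<in>UNIV. f y ((b $ i) *\<^sub>R e i) - f y 0)" and b: "b \<in> binary"
  shows "fhat f y b = f y b"
proof -
  have "(b $ i) *\<^sub>R (f y (e i) - f y 0) = f y ((b $ i) *\<^sub>R e i) - f y 0" for i
    using b unfolding binary_def by (cases "b $ i = 0") auto
  then show ?thesis unfolding fhat_def add by simp
qed

lemma rhat_bin:
  assumes add: "r y b = r y 0 + (\<Sum>i\<in>UNIV. r y ((b $ i) *\<^sub>R e i) - r y 0)" and b: "b \<in> binary"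
  shows "rhat r y b = r y b"
proof -
  have "(b $ i) * (r y (e i) - r y 0) = r y ((b $ i) *\<^sub>R e i) - r y 0" for i
    using b unfolding binary_def by (cases "b $ i = 0") auto
  then show ?thesis unfolding rhat_def add by simp
qed

lemma fhat_conv: "fhat f y ((1 - t) *\<^sub>R b1 + t *\<^sub>R b2) = (1 - t) *\<^sub>R fhat f y b1 + t *\<^sub>R fhat f y b2"
proof -
  have "(\<Sum>j\<in>UNIV. ((1 - t) *\<^sub>R b1 + t *\<^sub>R b2)$j *\<^sub>R (f y (e j) - f y 0))
      = (\<Sum>j\<in>UNIV. (1 - t) *\<^sub>R (b1$j *\<^sub>R (f y (e j) - f y 0)) + t *\<^sub>R (b2$j *\<^sub>R (f y (e j) - f y 0)))"
    by (rule sum.cong) (simp_all add: scaleR_add_left)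
  also have "\<dots> = (1 - t) *\<^sub>R (\<Sum>j\<in>UNIV. b1$j *\<^sub>R (f y (e j) - f y 0)) + t *\<^sub>R (\<Sum>j\<in>UNIV. b2$j *\<^sub>R (f y (e j) - f y 0))"
    by (simp add: scaleR_sum_right sum.distrib)
  finally have s: "(\<Sum>j\<in>UNIV. ((1 - t) *\<^sub>R b1 + t *\<^sub>R b2)$j *\<^sub>R (f y (e j) - f y 0)) = \<dots>" .
  have g: "(1 - t) *\<^sub>R (a + u) + t *\<^sub>R (a + w) = a + ((1 - t) *\<^sub>R u + t *\<^sub>R w)" for a u w :: "real^'z"
    by (simp add: algebra_simps)
  show ?thesis unfolding fhat_def s g ..
qed

lemma rhat_conv: "rhat r y ((1 - t) *\<^sub>R b1 + t *\<^sub>R b2) = (1 - t) * rhat r y b1 + t * rhat r y b2"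
proof -
  have "(\<Sum>j\<in>UNIV. ((1 - t) *\<^sub>R b1 + t *\<^sub>R b2)$j * (r y (e j) - r y 0))
      = (\<Sum>j\<in>UNIV. (1 - t) * (b1$j * (r y (e j) - r y 0)) + t * (b2$j * (r y (e j) - r y 0)))"
    by (rule sum.cong) (simp_all add: algebra_simps)
  also have "\<dots> = (1 - t) * (\<Sum>j\<in>UNIV. b1$j * (r y (e j) - r y 0)) + t * (\<Sum>j\<in>UNIV. b2$j * (r y (e j) - r y 0))"
    by (simp add: sum_distrib_left sum.distrib)
  finally have s: "(\<Sum>j\<in>UNIV. ((1 - t) *\<^sub>R b1 + t *\<^sub>R b2)$j * (r y (e j) - r y 0)) = \<dots>" .
  show ?thesis unfolding rhat_def s by (simp add: algebra_simps)
qed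

lemma solves_transfer:
  assumes "solves X T x0 F1 z" "\<And>y. y \<in> X \<Longrightarrow> F1 y = F2 y"
  shows "solves X T x0 F2 z"
  using assms unfolding solves_def by auto

lemma C2_C1data:
  assumes "C2 g"
  shows "\<exists>g'. (\<forall>x. (g has_derivative blinfun_apply (g' x)) (at x)) \<and> continuous_on UNIV g'"
proof -
  obtain g' g'' where d: "\<And>x. (g has_derivative blinfun_apply (g' x)) (at x)"
    and d2: "\<And>x. (g' has_derivative blinfun_apply (g'' x)) (at x)"
    using assms unfolding C2_def by blast
  have "continuous_on UNIV g'"
    using d2 by (meson continuous_at_imp_continuous_on has_derivative_continuous)
  then show ?thesis using d by blast
qed

lemma C1_cont: "C1 g \<Longrightarrow> continuous_on S g"
  unfolding C1_def by (meson continuous_at_imp_continuous_on has_derivative_continuous)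

lemma C2_cont: "C2 g \<Longrightarrow> continuous_on S g"
  unfolding C2_def by (meson continuous_at_imp_continuous_on has_derivative_continuous)


theorem theorem3:
  fixes X :: "(real^'n) set" and x0 :: "real^'n" and T :: real
    and f :: "real^'n \<Rightarrow> real^'m::finite \<Rightarrow> real^'n"
    and r :: "real^'n \<Rightarrow> real^'m \<Rightarrow> real" and q :: "real^'n \<Rightarrow> real"
  assumes T_pos: "T > 0"
    and x0_in: "x0 \<in> X"
    \<comment> \<open>standing assumption: the relevant ODEs have unique solutions on [0,T]\<close>
    and sol_bin: "\<And>b. b \<in> binary \<Longrightarrow> unique_sol X T x0 (\<lambda>y. f y b)"
    and sol_eps: "\<And>ab a eps. ab \<in> binary \<Longrightarrow> a \<in> binary \<Longrightarrow> 0 \<le> eps \<Longrightarrow> eps \<le> 1 \<Longrightarrow>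
                    unique_sol X T x0 (\<lambda>y. (1 - eps) *\<^sub>R f y ab + eps *\<^sub>R f y a)"
    and sol_hat: "\<And>a. a \<in> unit_cube \<Longrightarrow> unique_sol X T x0 (\<lambda>y. fhat f y a)"
    \<comment> \<open>(A1)\<close>
    and A1_C2: "\<And>a. a \<in> binary \<Longrightarrow> C2 (\<lambda>y. f y a)"
    and A1_lip: "\<And>a. a \<in> binary \<Longrightarrow> \<exists>L. L-lipschitz_on X (\<lambda>y. f y a)"
    \<comment> \<open>(A3)\<close>
    and A3_r: "\<And>a. a \<in> binary \<Longrightarrow> C1 (\<lambda>y. r y a)"
    and A3_q: "C1 q"
    \<comment> \<open>(Add)\<close>
    and Add_f: "\<And>y a. y \<in> X \<Longrightarrow> a \<in> binary \<Longrightarrow>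
                  f y a = f y 0 + (\<Sum>i\<in>UNIV. f y ((a $ i) *\<^sub>R e i) - f y 0)"
    and Add_r: "\<And>y a. y \<in> X \<Longrightarrow> a \<in> binary \<Longrightarrow>
                  r y a = r y 0 + (\<Sum>i\<in>UNIV. r y ((a $ i) *\<^sub>R e i) - r y 0)"
    \<comment> \<open>concavity of the reformulated payoff\<close>
    and concave: "concave_on unit_cube (Jhat X T x0 f r q)"
    and ab_bin: "ab \<in> binary"
    and a_bin: "a \<in> binary"
  shows "(\<Sum>i\<in>UNIV. DNS X T x0 f r q ab i * (a $ i - ab $ i))
           \<ge> Jpay X T x0 f r q a - Jpay X T x0 f r q ab"
proof -
  obtain Lb where Lb: "\<And>b. b \<in> binary \<Longrightarrow> (Lb b)-lipschitz_on X (\<lambda>y. f y b)"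
    using A1_lip by metis
  have Lnn: "\<And>b. b \<in> binary \<Longrightarrow> 0 \<le> Lb b" using Lb lipschitz_on_nonneg by blast
  define K where "K = Lb 0 + (\<Sum>j\<in>UNIV. Lb (e j) + Lb 0)"
  have K0: "0 \<le> K" unfolding K_def using Lnn zero_binary e_binary
    by (intro add_nonneg_nonneg sum_nonneg) auto
  have LipF: "K-lipschitz_on X (\<lambda>y. fhat f y \<alpha>)" if \<alpha>: "\<alpha> \<in> unit_cube" for \<alpha>
  proof (rule lipschitz_onI[OF _ K0])
    fix y z assume y: "y \<in> X" and z: "z \<in> X"
    have h0: "norm (f y 0 - f z 0) \<le> Lb 0 * dist y z"
      using lipschitz_onD[OF Lb[OF zero_binary] y z] by (simp add: dist_norm)
    have hj: "norm ((f y (e j) - f y 0) - (f z (e j) - f z 0)) \<le> (Lb (e j) + Lb 0) * dist y z" for j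
    proof -
      have "norm ((f y (e j) - f y 0) - (f z (e j) - f z 0)) \<le> norm (f y (e j) - f z (e j)) + norm (f y 0 - f z 0)"
        by (rule order_trans[OF _ norm_triangle_ineq4]) (simp add: algebra_simps)
      also have "\<dots> \<le> Lb (e j) * dist y z + Lb 0 * dist y z"
        using lipschitz_onD[OF Lb[OF e_binary[of j]] y z] h0 by (intro add_mono) (simp_all add: dist_norm)
      finally show ?thesis by (simp add: algebra_simps)
    qed
    have eq: "fhat f y \<alpha> - fhat f z \<alpha> = (f y 0 - f z 0) + (\<Sum>j\<in>UNIV. \<alpha>$j *\<^sub>R ((f y (e j) - f y 0) - (f z (e j) - f z 0)))"
      unfolding fhat_def by (simp add: scaleR_diff_right sum_subtractf)
    have "norm (fhat f y \<alpha> - fhat f z \<alpha>) \<le> norm (f y 0 - f z 0) + (\<Sum>j\<in>UNIV. norm (\<alpha>$j *\<^sub>R ((f y (e j) - f y 0) - (f z (e j) - f z 0))))"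
      unfolding eq by (rule order_trans[OF norm_triangle_ineq add_left_mono[OF norm_sum]])
    also have "\<dots> \<le> Lb 0 * dist y z + (\<Sum>j\<in>UNIV. (Lb (e j) + Lb 0) * dist y z)"
    proof (intro add_mono h0 sum_mono)
      fix j
      have a01: "0 \<le> \<alpha>$j" "\<alpha>$j \<le> 1" using \<alpha> unfolding unit_cube_def by auto
      have "norm (\<alpha>$j *\<^sub>R ((f y (e j) - f y 0) - (f z (e j) - f z 0))) = \<alpha>$j * norm ((f y (e j) - f y 0) - (f z (e j) - f z 0))"
        using a01 by simp
      also have "\<dots> \<le> 1 * norm ((f y (e j) - f y 0) - (f z (e j) - f z 0))"
        using a01 by (intro mult_right_mono) auto
      also have "\<dots> \<le> (Lb (e j) + Lb 0) * dist y z" using hj by simp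
      finally show "norm (\<alpha>$j *\<^sub>R ((f y (e j) - f y 0) - (f z (e j) - f z 0))) \<le> (Lb (e j) + Lb 0) * dist y z" .
    qed
    also have "\<dots> = K * dist y z" unfolding K_def by (simp add: sum_distrib_right sum_distrib_left algebra_simps)
    finally show "dist (fhat f y \<alpha>) (fhat f z \<alpha>) \<le> K * dist y z" by (simp add: dist_norm)
  qed
  have fh0: "fhat f y 0 = f y 0" for y unfolding fhat_def by simp
  have rh0: "rhat r y 0 = r y 0" for y unfolding rhat_def by simp
  obtain Pf' where dPf: "\<And>x. ((\<lambda>y. f y ab) has_derivative blinfun_apply (Pf' x)) (at x)" and cPf': "continuous_on UNIV Pf'"
    using C2_C1data[OF A1_C2[OF ab_bin]] by blast
  obtain Pr' where dPr: "\<And>x. ((\<lambda>y. r y ab) has_derivative blinfun_apply (Pr' x)) (at x)" and cPr': "continuous_on UNIV Pr'"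
    using A3_r[OF ab_bin] unfolding C1_def by blast
  obtain q' where dq: "\<And>x. (q has_derivative blinfun_apply (q' x)) (at x)" and cq': "continuous_on UNIV q'"
    using A3_q unfolding C1_def by blast
  interpret cost X T x0 "\<lambda>\<alpha> y. fhat f y \<alpha>" "\<lambda>j y. f y (e j) - f y 0" K "\<lambda>\<alpha> y. rhat r y \<alpha>"
    "\<lambda>j y. r y (e j) - r y 0" q ab "\<lambda>y. f y ab" Pf' "\<lambda>y. r y ab" Pr' q'
  proof unfold_locales
    show "0 < T" by (rule T_pos)
    show "\<And>\<alpha> y. fhat f y \<alpha> = fhat f y 0 + (\<Sum>j\<in>UNIV. \<alpha> $ j *\<^sub>R (f y (e j) - f y 0))"
      unfolding fhat_def by simp
    show "\<And>\<alpha>. \<alpha> \<in> unit_cube \<Longrightarrow> unique_sol X T x0 (\<lambda>y. fhat f y \<alpha>)" by (rule sol_hat)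
    show "continuous_on UNIV (\<lambda>y. fhat f y 0)"
      unfolding fh0 by (rule C2_cont[OF A1_C2[OF zero_binary]])
    show "\<And>j. continuous_on UNIV (\<lambda>y. f y (e j) - f y 0)"
      by (intro continuous_intros C2_cont[OF A1_C2[OF zero_binary]] C2_cont[OF A1_C2[OF e_binary]])
    show "0 \<le> K" by (rule K0)
    show "\<And>\<alpha>. \<alpha> \<in> unit_cube \<Longrightarrow> K-lipschitz_on X (\<lambda>y. fhat f y \<alpha>)" by (rule LipF)
    show "\<And>\<alpha> y. rhat r y \<alpha> = rhat r y 0 + (\<Sum>j\<in>UNIV. \<alpha> $ j * (r y (e j) - r y 0))"
      unfolding rhat_def by simp
    show "continuous_on UNIV (\<lambda>y. rhat r y 0)"
      unfolding rh0 by (rule C1_cont[OF A3_r[OF zero_binary]])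
    show "\<And>j. continuous_on UNIV (\<lambda>y. r y (e j) - r y 0)"
      by (intro continuous_intros C1_cont[OF A3_r[OF zero_binary]] C1_cont[OF A3_r[OF e_binary]])
    show "ab \<in> unit_cube" by (rule binary_cube[OF ab_bin])
    show "\<And>x. ((\<lambda>y. f y ab) has_derivative blinfun_apply (Pf' x)) (at x)" by (rule dPf)
    show "continuous_on UNIV Pf'" by (rule cPf')
    show "\<And>y. y \<in> X \<Longrightarrow> fhat f y ab = f y ab" by (rule fhat_bin[where f=f, OF Add_f ab_bin]) (use ab_bin in auto)
    show "\<And>x. ((\<lambda>y. r y ab) has_derivative blinfun_apply (Pr' x)) (at x)" by (rule dPr)
    show "continuous_on UNIV Pr'" by (rule cPr')
    show "\<And>y. y \<in> X \<Longrightarrow> rhat r y ab = r y ab" by (rule rhat_bin[where r=r, OF Add_r ab_bin]) (use ab_bin in auto)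
    show "\<And>x. (q has_derivative blinfun_apply (q' x)) (at x)" by (rule dq)
    show "continuous_on UNIV q'" by (rule cq')
  qed
  have JhJ: "Jh = Jhat X T x0 f r q" by (rule ext) (simp add: Jh_def yy_def Jhat_def Let_def)
  have conc: "concave_on unit_cube Jh" unfolding JhJ by (rule concave)

  have I1: "Jpay X T x0 f r q b = Jh b" if b: "b \<in> binary" for b
  proof -
    define z where "z = traj X T x0 (\<lambda>y. f y b)"
    have zs: "solves X T x0 (\<lambda>y. f y b) z"
    proof -
      have ex: "\<exists>z. solves X T x0 (\<lambda>y. f y b) z" using sol_bin[OF b] unfolding unique_sol_def by blast
      show ?thesis unfolding z_def traj_def by (rule someI_ex[OF ex])
    qed
    have bc: "b \<in> unit_cube" by (rule binary_cube[OF b])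
    have zs': "solves X T x0 (\<lambda>y. fhat f y b) z"
      by (rule solves_transfer[OF zs]) (rule fhat_bin[where f=f, OF Add_f b, symmetric], use b in auto)
    have eqz: "z t = yy b t" if "t \<in> {0..T}" for t
      using sol_hat[OF bc] zs' yy_solves[OF bc] that unfolding unique_sol_def by blast
    have T0: "T \<in> {0..T}" using T_pos by simp
    have "Jpay X T x0 f r q b = integral {0..T} (\<lambda>t. r (z t) b) + q (z T)"
      by (simp add: Jpay_def Jcal_def z_def)
    also have "\<dots> = integral {0..T} (\<lambda>t. rhat r (yy b t) b) + q (yy b T)"
    proof -
      have "integral {0..T} (\<lambda>t. r (z t) b) = integral {0..T} (\<lambda>t. rhat r (yy b t) b)"
      proof (rule integral_cong)
        fix t assume t: "t \<in> {0..T}"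
        show "r (z t) b = rhat r (yy b t) b"
          using eqz[OF t] rhat_bin[where r=r, OF Add_r[OF yy_X[OF bc t] b] b] by simp
      qed
      then show ?thesis using eqz[OF T0] by simp
    qed
    also have "\<dots> = Jh b" by (simp add: Jh_def)
    finally show ?thesis .
  qed
  have I2: "Jeps X T x0 f r q b1 b2 t = Jh ((1 - t) *\<^sub>R b1 + t *\<^sub>R b2)"
    if b1: "b1 \<in> binary" and b2: "b2 \<in> binary" and t: "0 \<le> t" "t \<le> 1" for b1 b2 t
  proof -
    define \<gamma> where "\<gamma> = (1 - t) *\<^sub>R b1 + t *\<^sub>R b2"
    have \<gamma>c: "\<gamma> \<in> unit_cube"
    proof -
      have "convex (unit_cube :: (real^'m) set)" using conc by (simp add: concave_on_iff)
      then show ?thesis unfolding \<gamma>_def using binary_cube[OF b1] binary_cube[OF b2] t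
        by (intro convexD) auto
    qed
    define z where "z = traj X T x0 (\<lambda>y. (1 - t) *\<^sub>R f y b1 + t *\<^sub>R f y b2)"
    have zs: "solves X T x0 (\<lambda>y. (1 - t) *\<^sub>R f y b1 + t *\<^sub>R f y b2) z"
    proof -
      have ex: "\<exists>z. solves X T x0 (\<lambda>y. (1 - t) *\<^sub>R f y b1 + t *\<^sub>R f y b2) z"
        using sol_eps[OF b1 b2 t] unfolding unique_sol_def by blast
      show ?thesis unfolding z_def traj_def by (rule someI_ex[OF ex])
    qed
    have zs': "solves X T x0 (\<lambda>y. fhat f y \<gamma>) z"
    proof (rule solves_transfer[OF zs])
      fix y assume y: "y \<in> X"
      show "(1 - t) *\<^sub>R f y b1 + t *\<^sub>R f y b2 = fhat f y \<gamma>"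
        unfolding \<gamma>_def fhat_conv using fhat_bin[where f=f, OF Add_f[OF y b1] b1] fhat_bin[where f=f, OF Add_f[OF y b2] b2] by simp
    qed
    have eqz: "z s = yy \<gamma> s" if "s \<in> {0..T}" for s
      using sol_hat[OF \<gamma>c] zs' yy_solves[OF \<gamma>c] that unfolding unique_sol_def by blast
    have T0: "T \<in> {0..T}" using T_pos by simp
    have Jc: "Jcal T r q z bk = integral {0..T} (\<lambda>s. rhat r (yy \<gamma> s) bk) + q (yy \<gamma> T)"
      if bk: "bk \<in> binary" for bk
    proof -
      have "integral {0..T} (\<lambda>s. r (z s) bk) = integral {0..T} (\<lambda>s. rhat r (yy \<gamma> s) bk)"
      proof (rule integral_cong)
        fix s assume s: "s \<in> {0..T}"
        show "r (z s) bk = rhat r (yy \<gamma> s) bk"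
          using eqz[OF s] rhat_bin[where r=r, OF Add_r[OF yy_X[OF \<gamma>c s] bk] bk] by simp
      qed
      then show ?thesis unfolding Jcal_def using eqz[OF T0] by simp
    qed
    have cc: "continuous_on {0..T} (\<lambda>s. rhat r (yy \<gamma> s) bk)" for bk
      by (rule continuous_on_compose2[OF R_cont yy_cont[OF \<gamma>c]]) auto
    have int: "(\<lambda>s. c * rhat r (yy \<gamma> s) bk) integrable_on {0..T}" for c bk
      by (intro integrable_continuous_real continuous_intros cc)
    have "Jeps X T x0 f r q b1 b2 t = (1 - t) * Jcal T r q z b1 + t * Jcal T r q z b2"
      by (simp add: Jeps_def z_def Let_def)
    also have "\<dots> = (1 - t) * integral {0..T} (\<lambda>s. rhat r (yy \<gamma> s) b1) + t * integral {0..T} (\<lambda>s. rhat r (yy \<gamma> s) b2)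
        + q (yy \<gamma> T)"
      unfolding Jc[OF b1] Jc[OF b2] by (simp add: algebra_simps)
    also have "(1 - t) * integral {0..T} (\<lambda>s. rhat r (yy \<gamma> s) b1) + t * integral {0..T} (\<lambda>s. rhat r (yy \<gamma> s) b2)
        = integral {0..T} (\<lambda>s. rhat r (yy \<gamma> s) \<gamma>)"
    proof -
      have "integral {0..T} (\<lambda>s. rhat r (yy \<gamma> s) \<gamma>) = integral {0..T} (\<lambda>s. (1 - t) * rhat r (yy \<gamma> s) b1 + t * rhat r (yy \<gamma> s) b2)"
        unfolding \<gamma>_def rhat_conv ..
      also have "\<dots> = integral {0..T} (\<lambda>s. (1 - t) * rhat r (yy \<gamma> s) b1) + integral {0..T} (\<lambda>s. t * rhat r (yy \<gamma> s) b2)"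
        by (rule integral_add) (rule int)+
      also have "\<dots> = (1 - t) * integral {0..T} (\<lambda>s. rhat r (yy \<gamma> s) b1) + t * integral {0..T} (\<lambda>s. rhat r (yy \<gamma> s) b2)"
        by (simp add: integral_mult_right)
      finally show ?thesis by simp
    qed
    also have "integral {0..T} (\<lambda>s. rhat r (yy \<gamma> s) \<gamma>) + q (yy \<gamma> T) = Jh \<gamma>" by (simp add: Jh_def)
    finally show ?thesis unfolding \<gamma>_def .
  qed

  have abc: "ab \<in> unit_cube" by (rule binary_cube[OF ab_bin])
  have ac: "a \<in> unit_cube" by (rule binary_cube[OF a_bin])
  have cvx: "convex (unit_cube :: (real^'m) set)" using conc by (simp add: concave_on_iff)
  define d where "d = a - ab"
  define v where "v i = d$i *\<^sub>R e i" for i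
  define \<psi> where "\<psi> i s = (Jh (ab + s *\<^sub>R v i) - Jh ab) / s" for i s
  define Ls where "Ls i = Sup (\<psi> i ` {0<..1})" for i
  have abi: "ab$i = 0 \<or> ab$i = 1" for i using ab_bin unfolding binary_def by auto
  have ai: "a$i = 0 \<or> a$i = 1" for i using a_bin unfolding binary_def by auto
  have cube_v: "ab + s *\<^sub>R v i \<in> unit_cube" if "0 \<le> s" "s \<le> 1" for i s
  proof -
    have "0 \<le> (ab + s *\<^sub>R v i)$j \<and> (ab + s *\<^sub>R v i)$j \<le> 1" for j
      using abi[of j] ai[of j] that by (auto simp: v_def d_def e_nth)
    then show ?thesis unfolding unit_cube_def by auto
  qed
  have cube_v1: "ab + v i \<in> unit_cube" for i using cube_v[of 1 i] by simp
  have ad: "ab + d = a" unfolding d_def by simp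
  obtain \<eta> C where \<eta>: "\<eta> > 0" and hC: "\<And>\<delta>. ab + \<delta> \<in> unit_cube \<Longrightarrow> nrm1 \<delta> \<le> \<eta> \<Longrightarrow> \<bar>Jh (ab+\<delta>) - Jh ab\<bar> \<le> C * nrm1 \<delta>"
    using Jh_bnd by blast
  have dle: "\<bar>d$i\<bar> \<le> 1" for i using abi[of i] ai[of i] unfolding d_def by auto
  have nv: "nrm1 (s *\<^sub>R v i) = \<bar>s\<bar> * \<bar>d$i\<bar>" for s i
    unfolding v_def scaleR_scaleR nrm1_e by (simp add: abs_mult)
  have lim: "(\<psi> i \<longlongrightarrow> Ls i) (at_right 0) \<and> (\<forall>s\<in>{0<..1}. \<psi> i s \<le> Ls i)" for i
  proof -
    have anti: "\<psi> i s' \<le> \<psi> i s" if "0 < s" "s \<le> s'" "s' \<le> 1" for s s'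
      unfolding \<psi>_def by (rule conc_quot[OF conc abc cube_v1 that])
    have bnd: "\<exists>\<eta>>0. \<exists>C. \<forall>s. 0 < s \<longrightarrow> s \<le> \<eta> \<longrightarrow> \<psi> i s \<le> C"
    proof (rule exI[of _ "min \<eta> 1"], intro conjI)
      show "min \<eta> 1 > 0" using \<eta> by simp
      show "\<exists>C'. \<forall>s. 0 < s \<longrightarrow> s \<le> min \<eta> 1 \<longrightarrow> \<psi> i s \<le> C'"
      proof (rule exI[of _ "\<bar>C\<bar>"], intro allI impI)
      fix s assume s: "0 < s" "s \<le> min \<eta> 1"
      have "nrm1 (s *\<^sub>R v i) \<le> \<eta>"
        unfolding nv using s dle[of i] by (smt (verit) mult_left_le)
      then have "\<bar>Jh (ab + s *\<^sub>R v i) - Jh ab\<bar> \<le> C * (s * \<bar>d$i\<bar>)"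
        using hC[OF cube_v[of s i]] s unfolding nv by simp
      also have "\<dots> \<le> \<bar>C\<bar> * s"
      proof -
        have "C * (s * \<bar>d$i\<bar>) \<le> \<bar>C\<bar> * (s * \<bar>d$i\<bar>)" using s by (intro mult_right_mono) auto
        also have "\<dots> \<le> \<bar>C\<bar> * s" using s dle[of i] by (intro mult_left_mono) (auto intro: mult_left_le)
        finally show ?thesis .
      qed
      finally have "Jh (ab + s *\<^sub>R v i) - Jh ab \<le> \<bar>C\<bar> * s" by simp
      then show "\<psi> i s \<le> \<bar>C\<bar>" unfolding \<psi>_def using s by (simp add: divide_le_eq)
      qed
    qed
    show ?thesis using mono_sup_lim[of "\<psi> i", OF anti bnd] unfolding Ls_def by auto
  qed
  have trm: "DNS X T x0 f r q ab i * (a $ i - ab $ i) = Ls i" for i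
  proof -
    consider "a$i = ab$i" | "ab$i = 0" "a$i = 1" | "ab$i = 1" "a$i = 0" using abi[of i] ai[of i] by auto
    then show ?thesis
    proof cases
      case 1
      then have "\<psi> i s = 0" for s unfolding \<psi>_def v_def d_def by simp
      then have "\<psi> i = (\<lambda>x. 0)" by (intro ext)
      then have "\<psi> i ` {0<..1} = {0}" by (simp add: image_constant_conv)
      then show ?thesis using 1 unfolding Ls_def by simp
    next
      case 2
      have vi: "v i = e i" unfolding v_def d_def using 2 by simp
      have b2: "ab + e i \<in> binary"
        using ab_bin 2 unfolding binary_def by (auto simp: e_nth)
      have ev: "\<forall>\<^sub>F s in at_right (0::real). (Jeps X T x0 f r q ab (ab + e i) s - Jpay X T x0 f r q ab) / s = \<psi> i s"
      proof -
        have "\<forall>\<^sub>F s in at_right (0::real). s \<in> {0<..<1}" by (rule eventually_at_right_real) simp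
        then show ?thesis
        proof eventually_elim
          case (elim s)
          have "(1 - s) *\<^sub>R ab + s *\<^sub>R (ab + e i) = ab + s *\<^sub>R v i" unfolding vi by (simp add: algebra_simps)
          then show ?case using I2[OF ab_bin b2, of s] I1[OF ab_bin] elim unfolding \<psi>_def by simp
        qed
      qed
      have "((\<lambda>s. (Jeps X T x0 f r q ab (ab + e i) s - Jpay X T x0 f r q ab) / s) \<longlongrightarrow> Ls i) (at_right 0)"
        using tendsto_cong[OF ev] lim[of i] by simp
      then have "DNS X T x0 f r q ab i = Ls i"
        unfolding DNS_def using 2 by (simp add: tendsto_Lim[OF trivial_limit_at_right_real])
      then show ?thesis using 2 by simp
    next
      case 3
      have vi: "v i = - e i" unfolding v_def d_def using 3 by simp
      have b2: "ab - e i \<in> binary"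
        using ab_bin 3 unfolding binary_def by (auto simp: e_nth)
      have ev: "\<forall>\<^sub>F s in at_right (0::real). (Jpay X T x0 f r q ab - Jeps X T x0 f r q ab (ab - e i) s) / s = - \<psi> i s"
      proof -
        have "\<forall>\<^sub>F s in at_right (0::real). s \<in> {0<..<1}" by (rule eventually_at_right_real) simp
        then show ?thesis
        proof eventually_elim
          case (elim s)
          have "(1 - s) *\<^sub>R ab + s *\<^sub>R (ab - e i) = ab + s *\<^sub>R v i" unfolding vi by (simp add: algebra_simps)
          then show ?case using I2[OF ab_bin b2, of s] I1[OF ab_bin] elim unfolding \<psi>_def
            by (simp add: minus_divide_left)
        qed
      qed
      have "((\<lambda>s. (Jpay X T x0 f r q ab - Jeps X T x0 f r q ab (ab - e i) s) / s) \<longlongrightarrow> - Ls i) (at_right 0)"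
        using tendsto_cong[OF ev] tendsto_minus[OF conjunct1[OF lim[of i]]] by simp
      then have "DNS X T x0 f r q ab i = - Ls i"
        unfolding DNS_def using 3 by (simp add: tendsto_Lim[OF trivial_limit_at_right_real])
      then show ?thesis using 3 by simp
    qed
  qed
  have key: "Jh a - Jh ab \<le> (\<Sum>i\<in>UNIV. Ls i)"
  proof (rule field_le_epsilon)
    fix \<epsilon> :: real assume \<epsilon>: "0 < \<epsilon>"
    define N where "N = nrm1 d"
    have N0: "N \<ge> 0" unfolding N_def by (rule nrm1_nonneg)
    define \<epsilon>' where "\<epsilon>' = \<epsilon> / (2 * (N + 1))"
    have \<epsilon>': "\<epsilon>' > 0" unfolding \<epsilon>'_def using \<epsilon> N0 by simp
    obtain \<eta>' where \<eta>': "\<eta>' > 0" and hA: "\<And>\<delta>0 (\<delta>s::'m \<Rightarrow> real^'m). \<delta>0 = (\<Sum>i\<in>UNIV. \<delta>s i) \<Longrightarrow> ab + \<delta>0 \<in> unit_cube \<Longrightarrow>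
       (\<forall>i. ab + \<delta>s i \<in> unit_cube) \<Longrightarrow> nrm1 \<delta>0 \<le> \<eta>' \<Longrightarrow> (\<forall>i. nrm1 (\<delta>s i) \<le> \<eta>') \<Longrightarrow>
       \<bar>(Jh (ab+\<delta>0) - Jh ab) - (\<Sum>i\<in>UNIV. Jh (ab + \<delta>s i) - Jh ab)\<bar> \<le> \<epsilon>' * (nrm1 \<delta>0 + (\<Sum>i\<in>UNIV. nrm1 (\<delta>s i)))"
      using addit[where 'k='m, OF \<epsilon>'] by blast
    define s where "s = min 1 (\<eta>' / (N + 1))"
    have s: "0 < s" "s \<le> 1" unfolding s_def using \<eta>' N0 by auto
    have sN: "s * N \<le> \<eta>'"
    proof -
      have "s * N \<le> \<eta>' / (N + 1) * N" unfolding s_def using N0 by (intro mult_right_mono) auto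
      also have "\<dots> \<le> \<eta>'" using N0 \<eta>' by (simp add: field_simps)
      finally show ?thesis .
    qed
    have s\<eta>: "s \<le> \<eta>'"
    proof -
      have "s \<le> \<eta>' / (N + 1)" unfolding s_def by simp
      also have "\<dots> \<le> \<eta>'" using N0 \<eta>' by (simp add: field_simps)
      finally show ?thesis .
    qed
    have dsum: "s *\<^sub>R d = (\<Sum>i\<in>UNIV. s *\<^sub>R v i)"
      unfolding v_def scaleR_sum_right[symmetric] by (subst expand_e[of d]) simp
    have cube_d: "ab + s *\<^sub>R d \<in> unit_cube"
    proof -
      have "(1 - s) *\<^sub>R ab + s *\<^sub>R a \<in> unit_cube" using cvx abc ac s by (intro convexD) auto
      then show ?thesis unfolding d_def by (simp add: algebra_simps)
    qed
    have nd: "nrm1 (s *\<^sub>R d) = s * N" unfolding nrm1_scale N_def using s by simp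
    have nsum: "(\<Sum>i\<in>UNIV. nrm1 (s *\<^sub>R v i)) = s * N"
      unfolding nv using s by (simp add: N_def nrm1_def sum_distrib_left)
    have A: "\<bar>(Jh (ab + s *\<^sub>R d) - Jh ab) - (\<Sum>i\<in>UNIV. Jh (ab + s *\<^sub>R v i) - Jh ab)\<bar> \<le> \<epsilon>' * (s * N + s * N)"
    proof -
      have "\<bar>(Jh (ab + s *\<^sub>R d) - Jh ab) - (\<Sum>i\<in>UNIV. Jh (ab + s *\<^sub>R v i) - Jh ab)\<bar>
          \<le> \<epsilon>' * (nrm1 (s *\<^sub>R d) + (\<Sum>i\<in>UNIV. nrm1 (s *\<^sub>R v i)))"
      proof (rule hA[OF dsum cube_d])
        show "\<forall>i. ab + s *\<^sub>R v i \<in> unit_cube" using cube_v s by auto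
        show "nrm1 (s *\<^sub>R d) \<le> \<eta>'" using nd sN by simp
        show "\<forall>i. nrm1 (s *\<^sub>R v i) \<le> \<eta>'"
        proof
          fix i
          have "nrm1 (s *\<^sub>R v i) = s * \<bar>d$i\<bar>" unfolding nv using s by simp
          also have "\<dots> \<le> s * 1" using s dle[of i] by (intro mult_left_mono) auto
          finally show "nrm1 (s *\<^sub>R v i) \<le> \<eta>'" using s\<eta> by simp
        qed
      qed
      then show ?thesis unfolding nd nsum .
    qed
    have B: "(\<Sum>i\<in>UNIV. Jh (ab + s *\<^sub>R v i) - Jh ab) \<le> s * (\<Sum>i\<in>UNIV. Ls i)"
    proof -
      have "(\<Sum>i\<in>UNIV. Jh (ab + s *\<^sub>R v i) - Jh ab) = (\<Sum>i\<in>UNIV. s * \<psi> i s)"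
        unfolding \<psi>_def using s by simp
      also have "\<dots> \<le> (\<Sum>i\<in>UNIV. s * Ls i)"
        using lim s by (intro sum_mono mult_left_mono) auto
      finally show ?thesis by (simp add: sum_distrib_left)
    qed
    have Cq: "s * (Jh a - Jh ab) \<le> Jh (ab + s *\<^sub>R d) - Jh ab"
    proof -
      have "(Jh (ab + 1 *\<^sub>R d) - Jh ab) / 1 \<le> (Jh (ab + s *\<^sub>R d) - Jh ab) / s"
        by (rule conc_quot[OF conc abc]) (use ad ac s in auto)
      then show ?thesis using s ad by (simp add: le_divide_eq mult.commute)
    qed
    have "s * (Jh a - Jh ab) \<le> s * ((\<Sum>i\<in>UNIV. Ls i) + 2 * \<epsilon>' * N)"
      using A B Cq by (simp add: algebra_simps abs_le_iff)
    then have "Jh a - Jh ab \<le> (\<Sum>i\<in>UNIV. Ls i) + 2 * \<epsilon>' * N" using s by simp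
    also have "2 * \<epsilon>' * N \<le> \<epsilon>"
    proof -
      have "2 * \<epsilon>' * N = \<epsilon> * (N / (N + 1))" unfolding \<epsilon>'_def using N0 by (simp add: field_simps)
      also have "\<dots> \<le> \<epsilon> * 1" using N0 \<epsilon> by (intro mult_left_mono) auto
      finally show ?thesis by simp
    qed
    finally show "Jh a - Jh ab \<le> (\<Sum>i\<in>UNIV. Ls i) + \<epsilon>" by simp
  qed
  show ?thesis using key trm I1[OF a_bin] I1[OF ab_bin] by simp
qed

end
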